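(* In the affine Schur category $\mathcal{AS}$ over a commutative ring $\Bbbk$, for all integers $a,b\ge 1$ and all $u\in\Bbbk$ the following equalities of morphisms hold: $$(X_{a,b}\otimes 1_u)\circ(1_a\otimes D_{u,b})\circ(D_{u,a}\otimes 1_b)=(1_b\otimes D_{u,a})\circ(D_{u,b}\otimes 1_a)\circ(1_u\otimes X_{a,b})\quad\text{as morphisms }(u,a,b)\to(b,a,u),$$ $$(1_u\otimes X_{a,b})\circ(U_{a,u}\otimes 1_b)\circ(1_a\otimes U_{b,u})=(U_{b,u}\otimes 1_a)\circ(1_b\otimes U_{a,u})\circ(X_{a,b}\otimes 1_u)\quad\text{as morphisms }(a,b,u)\to(u,b,a).$$
   Context: Let $\Bbbk$ be a commutative ring with $1$. The affine Schur category $\mathcal{AS}$ is the strict $\Bbbk$-linear monoidal category defined as follows. Generating objects: the integers $a\ge1$ (black strands of thickness $a$) and the elements $u\in\Bbbk$ (red strands labelled $u$); objects are finite words in these, tensor product being concatenation, written $(x_1,\dots,x_k)$ or $x_1\otimes\cdots\otimes x_k$. Generating morphisms, for $a,b\ge1$, $u\in\Bbbk$: merge $M_{a,b}:(a,b)\to(a+b)$, split $S_{a,b}:(a+b)\to(a,b)$, crossing $X_{a,b}:(a,b)\to(b,a)$, dot $\omega_a:(a)\to(a)$, traverse-up $U_{a,u}:(a,u)\to(u,a)$, traverse-down $D_{u,a}:(u,a)\to(a,u)$. Conventions: a black strand of thickness $0$ is the unit object and any merge, split or crossing involving a thickness-$0$ strand is an identity; $1_x$ is an identity. Derived morphisms: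 $\omega_{a,0}:=1_a$; $\omega_{a,r}:=M_{r,a-r}\circ(\omega_r\otimes1_{a-r})\circ S_{r,a-r}$ for $1\le r\le a$ (so $\omega_{a,a}=\omega_a$); $\omega_{a,r}:=0$ if $r<0$ or $r>a$; $S^{(a)}:(a)\to(1,\dots,1)$ and $M^{(a)}:(1,\dots,1)\to(a)$ are iterated splits/merges; $g_r(u):=\sum_{i=0}^{r}(-1)^i\big(\prod_{j=0}^{i-1}(u+j)\big)\omega_{r,r-i}\in\mathrm{End}(r)$. Defining relations, for all $a,b,c,d,r\ge1$, $u\in\Bbbk$: (R1) $M_{a+b,c}(M_{a,b}\otimes1_c)=M_{a,b+c}(1_a\otimes M_{b,c})$, $(S_{a,b}\otimes1_c)S_{a+b,c}=(1_a\otimes S_{b,c})S_{a,b+c}$; (R2) if $a+c=b+d$: $S_{b,d}M_{a,c}=\sum(M_{s,c-t}\otimes M_{a-s,t})(1_s\otimes X_{a-s,c-t}\otimes1_t)(S_{s,a-s}\otimes S_{c-t,t})$ over $0\le s\le\min(a,b)$, $0\le t\le\min(c,d)$, $t-s=d-a$; (R3) $M_{a,b}S_{a,b}=\binom{a+b}{a}1_{a+b}$; (R4) $(\omega_b\otimes1_a)X_{a,b}=\sum_{t=0}^{\min(a,b)}t!\,(M_{t,b-t}\otimes M_{a-t,t})(1_t\otimes X_{a-t,b-t}\otimes1_t)(1_t\otimes1_{a-t}\otimes\omega_{b-t}\otimes1_t)(S_{t,a-t}\otimes S_{b-t,t})$ and $X_{b,a}(\omega_b\otimes1_a)=\sum_{t=0}^{\min(a,b)}t!\,(M_{t,a-t}\otimes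 M_{b-t,t})(1_t\otimes1_{a-t}\otimes\omega_{b-t}\otimes1_t)(1_t\otimes X_{b-t,a-t}\otimes1_t)(S_{t,b-t}\otimes S_{a-t,t})$; (R5) $S_{a,b}\omega_{a+b}=(\omega_a\otimes\omega_b)S_{a,b}$, $\omega_{a+b}M_{a,b}=M_{a,b}(\omega_a\otimes\omega_b)$; (R6) $M^{(a)}(\omega_1\otimes\cdots\otimes\omega_1)S^{(a)}=a!\,\omega_a$; (R7) $D_{u,r}U_{r,u}=g_r(u)\otimes1_u$, $U_{r,u}D_{u,r}=1_u\otimes g_r(u)$; (R8) $(D_{u,b}\otimes1_a)(1_u\otimes X_{a,b})(U_{a,u}\otimes1_b)=(1_b\otimes U_{a,u})(X_{a,b}\otimes1_u)(1_a\otimes D_{u,b})+\sum_{t=1}^{\min(a,b)}t!\,(M_{t,b-t}\otimes1_u\otimes M_{a-t,t})(1_t\otimes1_{b-t}\otimes U_{a-t,u}\otimes1_t)(1_t\otimes X_{a-t,b-t}\otimes1_u\otimes1_t)(1_t\otimes1_{a-t}\otimes D_{u,b-t}\otimes1_t)(S_{t,a-t}\otimes1_u\otimes S_{b-t,t})$; (R9) $(1_u\otimes S_{b,c})U_{b+c,u}=(U_{b,u}\otimes1_c)(1_b\otimes U_{c,u})(S_{b,c}\otimes1_u)$, $(S_{a,b}\otimes1_u)D_{u,a+b}=(1_a\otimes D_{u,b})(D_{u,a}\otimes1_b)(1_u\otimes S_{a,b})$, $D_{u,b+c}(1_u\otimes M_{b,c})=(M_{b,c}\otimes1_u)(1_b\otimes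 D_{u,c})(D_{u,b}\otimes1_c)$, $U_{a+b,u}(M_{a,b}\otimes1_u)=(1_u\otimes M_{a,b})(U_{a,u}\otimes1_b)(1_a\otimes U_{b,u})$. *)

theory Defs
  imports Main
begin

text \<open>Objects: words in generating objects (black strands of thickness a \<ge> 1, red strands u).
  Morphisms: formal expressions built from generators by composition, tensor product and
  k-linear combinations; equality of morphisms in AS is the relation as_eq, the smallest
  equivalence on well-typed expressions that is a congruence for all operations, satisfies
  the axioms of a strict k-linear monoidal category, and contains the defining relations R1-R9.\<close>

datatype 'k ob = Blk nat | Red 'k

datatype 'k mor =
    Idm "'k ob list"
  | Mg nat nat
  | Sp nat nat
  | Cr nat nat
  | Dt nat
  | Up nat 'k
  | Dn 'k nat
  | Cmp "'k mor" "'k mor"   \<comment> \<open>Cmp f g = f \<circ> g (g first)\<close>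
  | Tns "'k mor" "'k mor"
  | Zr "'k ob list" "'k ob list"
  | Ad "'k mor" "'k mor"
  | Sm 'k "'k mor"

definition validob :: "'k ob list \<Rightarrow> bool" where
  "validob x \<longleftrightarrow> Blk 0 \<notin> set x"

inductive hty :: "'k mor \<Rightarrow> 'k ob list \<Rightarrow> 'k ob list \<Rightarrow> bool" where
  ty_id: "validob x \<Longrightarrow> hty (Idm x) x x"
| ty_mg: "a \<ge> 1 \<Longrightarrow> b \<ge> 1 \<Longrightarrow> hty (Mg a b) [Blk a, Blk b] [Blk (a+b)]"
| ty_sp: "a \<ge> 1 \<Longrightarrow> b \<ge> 1 \<Longrightarrow> hty (Sp a b) [Blk (a+b)] [Blk a, Blk b]"
| ty_cr: "a \<ge> 1 \<Longrightarrow> b \<ge> 1 \<Longrightarrow> hty (Cr a b) [Blk a, Blk b] [Blk b, Blk a]"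
| ty_dt: "a \<ge> 1 \<Longrightarrow> hty (Dt a) [Blk a] [Blk a]"
| ty_up: "a \<ge> 1 \<Longrightarrow> hty (Up a u) [Blk a, Red u] [Red u, Blk a]"
| ty_dn: "a \<ge> 1 \<Longrightarrow> hty (Dn u a) [Red u, Blk a] [Blk a, Red u]"
| ty_cmp: "hty f y z \<Longrightarrow> hty g x y \<Longrightarrow> hty (Cmp f g) x z"
| ty_tns: "hty f x y \<Longrightarrow> hty g x' y' \<Longrightarrow> hty (Tns f g) (x @ x') (y @ y')"
| ty_zr: "validob x \<Longrightarrow> validob y \<Longrightarrow> hty (Zr x y) x y"
| ty_ad: "hty f x y \<Longrightarrow> hty g x y \<Longrightarrow> hty (Ad f g) x y"
| ty_sm: "hty f x y \<Longrightarrow> hty (Sm c f) x y"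

text \<open>A black strand of thickness 0 is the unit object (empty word); merges, splits,
  crossings, dots, traverses involving thickness 0 are identities.\<close>

definition bk :: "nat \<Rightarrow> 'k ob list" where
  "bk a = (if a = 0 then [] else [Blk a])"

definition idb :: "nat \<Rightarrow> 'k mor" where
  "idb a = Idm (bk a)"

definition mM :: "nat \<Rightarrow> nat \<Rightarrow> 'k mor" where
  "mM a b = (if a = 0 \<or> b = 0 then idb (a+b) else Mg a b)"

definition mS :: "nat \<Rightarrow> nat \<Rightarrow> 'k mor" where
  "mS a b = (if a = 0 \<or> b = 0 then idb (a+b) else Sp a b)"

definition mX :: "nat \<Rightarrow> nat \<Rightarrow> 'k mor" where
  "mX a b = (if a = 0 \<or> b = 0 then idb (a+b) else Cr a b)"

definition om :: "nat \<Rightarrow> 'k mor" where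
  "om a = (if a = 0 then Idm [] else Dt a)"

definition mU :: "nat \<Rightarrow> 'k \<Rightarrow> 'k mor" where
  "mU a u = (if a = 0 then Idm [Red u] else Up a u)"

definition mD :: "'k \<Rightarrow> nat \<Rightarrow> 'k mor" where
  "mD u a = (if a = 0 then Idm [Red u] else Dn u a)"

definition msum :: "'k ob list \<Rightarrow> 'k ob list \<Rightarrow> 'k mor list \<Rightarrow> 'k mor" where
  "msum x y ts = foldr Ad ts (Zr x y)"

definition omr :: "nat \<Rightarrow> nat \<Rightarrow> 'k mor" where
  "omr a r = (if r = 0 then idb a
              else if r > a then Zr (bk a) (bk a)
              else Cmp (Cmp (mM r (a-r)) (Tns (om r) (idb (a-r)))) (mS r (a-r)))"

definition gpol :: "nat \<Rightarrow> 'k::comm_ring_1 \<Rightarrow> 'k mor" where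
  "gpol r u = msum (bk r) (bk r)
     (map (\<lambda>i. Sm ((-1)^i * (\<Prod>j<i. u + of_nat j)) (omr r (r - i))) [0..<Suc r])"

fun Sall :: "nat \<Rightarrow> 'k mor" where
  "Sall 0 = Idm []"
| "Sall (Suc 0) = Idm [Blk 1]"
| "Sall (Suc (Suc n)) = Cmp (Tns (Sall (Suc n)) (Idm [Blk 1])) (mS (Suc n) 1)"

fun Mall :: "nat \<Rightarrow> 'k mor" where
  "Mall 0 = Idm []"
| "Mall (Suc 0) = Idm [Blk 1]"
| "Mall (Suc (Suc n)) = Cmp (mM (Suc n) 1) (Tns (Mall (Suc n)) (Idm [Blk 1]))"

fun dots1 :: "nat \<Rightarrow> 'k mor" where
  "dots1 0 = Idm []"
| "dots1 (Suc n) = Tns (dots1 n) (Dt 1)"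

definition R2rhs :: "nat \<Rightarrow> nat \<Rightarrow> nat \<Rightarrow> nat \<Rightarrow> 'k mor" where
  "R2rhs a b c d = msum [Blk a, Blk c] [Blk b, Blk d]
     (map (\<lambda>(s,t). Cmp (Cmp (Tns (mM s (c-t)) (mM (a-s) t))
                            (Tns (Tns (idb s) (mX (a-s) (c-t))) (idb t)))
                       (Tns (mS s (a-s)) (mS (c-t) t)))
       [(s,t). s \<leftarrow> [0..<Suc (min a b)], t \<leftarrow> [0..<Suc (min c d)],
               int t - int s = int d - int a])"

definition R4rhs1 :: "nat \<Rightarrow> nat \<Rightarrow> 'k::comm_ring_1 mor" where
  "R4rhs1 a b = msum [Blk a, Blk b] [Blk b, Blk a]
     (map (\<lambda>t. Sm (of_nat (fact t))
        (Cmp (Cmp (Cmp (Tns (mM t (b-t)) (mM (a-t) t))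
                       (Tns (Tns (idb t) (mX (a-t) (b-t))) (idb t)))
                  (Tns (Tns (Tns (idb t) (idb (a-t))) (om (b-t))) (idb t)))
             (Tns (mS t (a-t)) (mS (b-t) t))))
       [0..<Suc (min a b)])"

definition R4rhs2 :: "nat \<Rightarrow> nat \<Rightarrow> 'k::comm_ring_1 mor" where
  "R4rhs2 a b = msum [Blk b, Blk a] [Blk a, Blk b]
     (map (\<lambda>t. Sm (of_nat (fact t))
        (Cmp (Cmp (Cmp (Tns (mM t (a-t)) (mM (b-t) t))
                       (Tns (Tns (Tns (idb t) (idb (a-t))) (om (b-t))) (idb t)))
                  (Tns (Tns (idb t) (mX (b-t) (a-t))) (idb t)))
             (Tns (mS t (b-t)) (mS (a-t) t))))
       [0..<Suc (min a b)])"

definition R8rhs :: "nat \<Rightarrow> nat \<Rightarrow> 'k::comm_ring_1 \<Rightarrow> 'k mor" where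
  "R8rhs a b u = Ad
     (Cmp (Cmp (Tns (idb b) (mU a u)) (Tns (mX a b) (Idm [Red u]))) (Tns (idb a) (mD u b)))
     (msum [Blk a, Red u, Blk b] [Blk b, Red u, Blk a]
       (map (\<lambda>t. Sm (of_nat (fact t))
          (Cmp (Cmp (Cmp (Cmp
             (Tns (Tns (mM t (b-t)) (Idm [Red u])) (mM (a-t) t))
             (Tns (Tns (Tns (idb t) (idb (b-t))) (mU (a-t) u)) (idb t)))
             (Tns (Tns (Tns (idb t) (mX (a-t) (b-t))) (Idm [Red u])) (idb t)))
             (Tns (Tns (Tns (idb t) (idb (a-t))) (mD u (b-t))) (idb t)))
             (Tns (Tns (mS t (a-t)) (Idm [Red u])) (mS (b-t) t))))
         [1..<Suc (min a b)]))"

inductive as_eq :: "'k::comm_ring_1 mor \<Rightarrow> 'k mor \<Rightarrow> bool" where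
  e_refl: "hty f x y \<Longrightarrow> as_eq f f"
| e_sym: "as_eq f g \<Longrightarrow> as_eq g f"
| e_trans: "as_eq f g \<Longrightarrow> as_eq g h \<Longrightarrow> as_eq f h"
| c_cmp: "as_eq f f' \<Longrightarrow> as_eq g g' \<Longrightarrow> hty f y z \<Longrightarrow> hty g x y \<Longrightarrow> as_eq (Cmp f g) (Cmp f' g')"
| c_tns: "as_eq f f' \<Longrightarrow> as_eq g g' \<Longrightarrow> as_eq (Tns f g) (Tns f' g')"
| c_ad: "as_eq f f' \<Longrightarrow> as_eq g g' \<Longrightarrow> hty f x y \<Longrightarrow> hty g x y \<Longrightarrow> as_eq (Ad f g) (Ad f' g')"
| c_sm: "as_eq f f' \<Longrightarrow> as_eq (Sm c f) (Sm c f')"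
| cat_idl: "hty f x y \<Longrightarrow> as_eq (Cmp (Idm y) f) f"
| cat_idr: "hty f x y \<Longrightarrow> as_eq (Cmp f (Idm x)) f"
| cat_assoc: "hty f z w \<Longrightarrow> hty g y z \<Longrightarrow> hty h x y \<Longrightarrow>
     as_eq (Cmp (Cmp f g) h) (Cmp f (Cmp g h))"
| mon_assoc: "hty f x y \<Longrightarrow> hty g x' y' \<Longrightarrow> hty h x'' y'' \<Longrightarrow>
     as_eq (Tns (Tns f g) h) (Tns f (Tns g h))"
| mon_unitl: "hty f x y \<Longrightarrow> as_eq (Tns (Idm []) f) f"
| mon_unitr: "hty f x y \<Longrightarrow> as_eq (Tns f (Idm [])) f"
| mon_id: "validob x \<Longrightarrow> validob y \<Longrightarrow> as_eq (Tns (Idm x) (Idm y)) (Idm (x @ y))"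
| mon_interchange: "hty f y z \<Longrightarrow> hty g x y \<Longrightarrow> hty f' y' z' \<Longrightarrow> hty g' x' y' \<Longrightarrow>
     as_eq (Tns (Cmp f g) (Cmp f' g')) (Cmp (Tns f f') (Tns g g'))"
| lin_add_assoc: "hty f x y \<Longrightarrow> hty g x y \<Longrightarrow> hty h x y \<Longrightarrow> as_eq (Ad (Ad f g) h) (Ad f (Ad g h))"
| lin_add_comm: "hty f x y \<Longrightarrow> hty g x y \<Longrightarrow> as_eq (Ad f g) (Ad g f)"
| lin_add_zero: "hty f x y \<Longrightarrow> as_eq (Ad f (Zr x y)) f"
| lin_add_neg: "hty f x y \<Longrightarrow> as_eq (Ad f (Sm (-1) f)) (Zr x y)"
| lin_sm_one: "hty f x y \<Longrightarrow> as_eq (Sm 1 f) f"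
| lin_sm_mult: "hty f x y \<Longrightarrow> as_eq (Sm (c * d) f) (Sm c (Sm d f))"
| lin_sm_add: "hty f x y \<Longrightarrow> as_eq (Sm (c + d) f) (Ad (Sm c f) (Sm d f))"
| lin_sm_dist: "hty f x y \<Longrightarrow> hty g x y \<Longrightarrow> as_eq (Sm c (Ad f g)) (Ad (Sm c f) (Sm c g))"
| bil_cmp_addl: "hty f y z \<Longrightarrow> hty f' y z \<Longrightarrow> hty g x y \<Longrightarrow>
     as_eq (Cmp (Ad f f') g) (Ad (Cmp f g) (Cmp f' g))"
| bil_cmp_addr: "hty f y z \<Longrightarrow> hty g x y \<Longrightarrow> hty g' x y \<Longrightarrow>
     as_eq (Cmp f (Ad g g')) (Ad (Cmp f g) (Cmp f g'))"
| bil_cmp_sml: "hty f y z \<Longrightarrow> hty g x y \<Longrightarrow> as_eq (Cmp (Sm c f) g) (Sm c (Cmp f g))"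
| bil_cmp_smr: "hty f y z \<Longrightarrow> hty g x y \<Longrightarrow> as_eq (Cmp f (Sm c g)) (Sm c (Cmp f g))"
| bil_cmp_zrl: "hty g x y \<Longrightarrow> validob z \<Longrightarrow> as_eq (Cmp (Zr y z) g) (Zr x z)"
| bil_cmp_zrr: "hty f y z \<Longrightarrow> validob x \<Longrightarrow> as_eq (Cmp f (Zr x y)) (Zr x z)"
| bil_tns_addl: "hty f x y \<Longrightarrow> hty f' x y \<Longrightarrow> hty g x' y' \<Longrightarrow>
     as_eq (Tns (Ad f f') g) (Ad (Tns f g) (Tns f' g))"
| bil_tns_addr: "hty f x y \<Longrightarrow> hty g x' y' \<Longrightarrow> hty g' x' y' \<Longrightarrow>
     as_eq (Tns f (Ad g g')) (Ad (Tns f g) (Tns f g'))"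
| bil_tns_sml: "hty f x y \<Longrightarrow> hty g x' y' \<Longrightarrow> as_eq (Tns (Sm c f) g) (Sm c (Tns f g))"
| bil_tns_smr: "hty f x y \<Longrightarrow> hty g x' y' \<Longrightarrow> as_eq (Tns f (Sm c g)) (Sm c (Tns f g))"
| bil_tns_zrl: "hty g x' y' \<Longrightarrow> validob x \<Longrightarrow> validob y \<Longrightarrow>
     as_eq (Tns (Zr x y) g) (Zr (x @ x') (y @ y'))"
| bil_tns_zrr: "hty f x y \<Longrightarrow> validob x' \<Longrightarrow> validob y' \<Longrightarrow>
     as_eq (Tns f (Zr x' y')) (Zr (x @ x') (y @ y'))"
| R1a: "a \<ge> 1 \<Longrightarrow> b \<ge> 1 \<Longrightarrow> c \<ge> 1 \<Longrightarrow>
     as_eq (Cmp (mM (a+b) c) (Tns (mM a b) (idb c))) (Cmp (mM a (b+c)) (Tns (idb a) (mM b c)))"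
| R1b: "a \<ge> 1 \<Longrightarrow> b \<ge> 1 \<Longrightarrow> c \<ge> 1 \<Longrightarrow>
     as_eq (Cmp (Tns (mS a b) (idb c)) (mS (a+b) c)) (Cmp (Tns (idb a) (mS b c)) (mS a (b+c)))"
| R2: "a \<ge> 1 \<Longrightarrow> b \<ge> 1 \<Longrightarrow> c \<ge> 1 \<Longrightarrow> d \<ge> 1 \<Longrightarrow> a + c = b + d \<Longrightarrow>
     as_eq (Cmp (mS b d) (mM a c)) (R2rhs a b c d)"
| R3: "a \<ge> 1 \<Longrightarrow> b \<ge> 1 \<Longrightarrow>
     as_eq (Cmp (mM a b) (mS a b)) (Sm (of_nat ((a+b) choose a)) (idb (a+b)))"
| R4a: "a \<ge> 1 \<Longrightarrow> b \<ge> 1 \<Longrightarrow>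
     as_eq (Cmp (Tns (om b) (idb a)) (mX a b)) (R4rhs1 a b)"
| R4b: "a \<ge> 1 \<Longrightarrow> b \<ge> 1 \<Longrightarrow>
     as_eq (Cmp (mX b a) (Tns (om b) (idb a))) (R4rhs2 a b)"
| R5a: "a \<ge> 1 \<Longrightarrow> b \<ge> 1 \<Longrightarrow>
     as_eq (Cmp (mS a b) (om (a+b))) (Cmp (Tns (om a) (om b)) (mS a b))"
| R5b: "a \<ge> 1 \<Longrightarrow> b \<ge> 1 \<Longrightarrow>
     as_eq (Cmp (om (a+b)) (mM a b)) (Cmp (mM a b) (Tns (om a) (om b)))"
| R6: "a \<ge> 1 \<Longrightarrow>
     as_eq (Cmp (Cmp (Mall a) (dots1 a)) (Sall a)) (Sm (of_nat (fact a)) (om a))"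
| R7a: "r \<ge> 1 \<Longrightarrow> as_eq (Cmp (mD u r) (mU r u)) (Tns (gpol r u) (Idm [Red u]))"
| R7b: "r \<ge> 1 \<Longrightarrow> as_eq (Cmp (mU r u) (mD u r)) (Tns (Idm [Red u]) (gpol r u))"
| R8: "a \<ge> 1 \<Longrightarrow> b \<ge> 1 \<Longrightarrow>
     as_eq (Cmp (Cmp (Tns (mD u b) (idb a)) (Tns (Idm [Red u]) (mX a b))) (Tns (mU a u) (idb b)))
           (R8rhs a b u)"
| R9a: "b \<ge> 1 \<Longrightarrow> c \<ge> 1 \<Longrightarrow>
     as_eq (Cmp (Tns (Idm [Red u]) (mS b c)) (mU (b+c) u))
           (Cmp (Cmp (Tns (mU b u) (idb c)) (Tns (idb b) (mU c u))) (Tns (mS b c) (Idm [Red u])))"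
| R9b: "a \<ge> 1 \<Longrightarrow> b \<ge> 1 \<Longrightarrow>
     as_eq (Cmp (Tns (mS a b) (Idm [Red u])) (mD u (a+b)))
           (Cmp (Cmp (Tns (idb a) (mD u b)) (Tns (mD u a) (idb b))) (Tns (Idm [Red u]) (mS a b)))"
| R9c: "b \<ge> 1 \<Longrightarrow> c \<ge> 1 \<Longrightarrow>
     as_eq (Cmp (mD u (b+c)) (Tns (Idm [Red u]) (mM b c)))
           (Cmp (Cmp (Tns (mM b c) (Idm [Red u])) (Tns (idb b) (mD u c))) (Tns (mD u b) (idb c)))"
| R9d: "a \<ge> 1 \<Longrightarrow> b \<ge> 1 \<Longrightarrow>
     as_eq (Cmp (mU (a+b) u) (Tns (mM a b) (Idm [Red u])))
           (Cmp (Cmp (Tns (Idm [Red u]) (mM a b)) (Tns (mU a u) (idb b))) (Tns (idb a) (mU b u)))"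

end

theory Submission
  imports Defs
begin


fun tyof :: "'k mor \<Rightarrow> ('k ob list \<times> 'k ob list) option" where
  "tyof (Idm x) = (if validob x then Some (x,x) else None)"
| "tyof (Mg a b) = (if a \<ge> 1 \<and> b \<ge> 1 then Some ([Blk a, Blk b], [Blk (a+b)]) else None)"
| "tyof (Sp a b) = (if a \<ge> 1 \<and> b \<ge> 1 then Some ([Blk (a+b)], [Blk a, Blk b]) else None)"
| "tyof (Cr a b) = (if a \<ge> 1 \<and> b \<ge> 1 then Some ([Blk a, Blk b], [Blk b, Blk a]) else None)"
| "tyof (Dt a) = (if a \<ge> 1 then Some ([Blk a], [Blk a]) else None)"
| "tyof (Up a u) = (if a \<ge> 1 then Some ([Blk a, Red u], [Red u, Blk a]) else None)"
| "tyof (Dn u a) = (if a \<ge> 1 then Some ([Red u, Blk a], [Blk a, Red u]) else None)"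
| "tyof (Cmp f g) = (case tyof f of None \<Rightarrow> None | Some (y,z) \<Rightarrow>
      (case tyof g of None \<Rightarrow> None | Some (x,y') \<Rightarrow> if y = y' then Some (x,z) else None))"
| "tyof (Tns f g) = (case tyof f of None \<Rightarrow> None | Some (x,y) \<Rightarrow>
      (case tyof g of None \<Rightarrow> None | Some (x',y') \<Rightarrow> Some (x@x', y@y')))"
| "tyof (Zr x y) = (if validob x \<and> validob y then Some (x,y) else None)"
| "tyof (Ad f g) = (if tyof f = tyof g then tyof f else None)"
| "tyof (Sm c f) = tyof f"

lemma tyof_sound: "tyof f = Some (x,y) \<Longrightarrow> hty f x y"
proof (induction f arbitrary: x y)
  case (Cmp f g)
  then show ?case by (auto split: option.splits if_splits) (metis hty.ty_cmp)
next
  case (Tns f g)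
  then show ?case by (auto split: option.splits if_splits) (metis hty.ty_tns)
next
  case (Ad f g)
  then show ?case by (auto split: option.splits if_splits intro: hty.intros)
qed (auto split: if_splits intro: hty.intros)

definition EQ :: "'k::comm_ring_1 mor \<Rightarrow> 'k mor \<Rightarrow> bool" (infix "\<simeq>" 50) where
  "f \<simeq> g \<longleftrightarrow> as_eq f g \<and> tyof f = tyof g \<and> tyof f \<noteq> None"

lemma EQ_refl: "tyof f \<noteq> None \<Longrightarrow> f \<simeq> f"
  unfolding EQ_def by (cases "tyof f") (auto intro: as_eq.e_refl tyof_sound)
lemma EQ_sym: "f \<simeq> g \<Longrightarrow> g \<simeq> f"
  unfolding EQ_def by (metis as_eq.e_sym)
lemma EQ_trans[trans]: "f \<simeq> g \<Longrightarrow> g \<simeq> h \<Longrightarrow> f \<simeq> h"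
  unfolding EQ_def by (metis as_eq.e_trans)
lemma EQ_ty: "f \<simeq> g \<Longrightarrow> tyof g = tyof f" unfolding EQ_def by metis
lemma EQ_tyf: "f \<simeq> g \<Longrightarrow> tyof f \<noteq> None" unfolding EQ_def by metis
lemma EQ_tyg: "f \<simeq> g \<Longrightarrow> tyof g \<noteq> None" unfolding EQ_def by metis

lemma ax: "as_eq f g \<Longrightarrow> tyof f \<noteq> None \<Longrightarrow> tyof g = tyof f \<Longrightarrow> f \<simeq> g"
  unfolding EQ_def by auto

lemma E_cmp: assumes "f \<simeq> f'" "g \<simeq> g'" "tyof (Cmp f g) \<noteq> None" shows "Cmp f g \<simeq> Cmp f' g'"
proof -
  obtain y z where f: "tyof f = Some (y,z)" using assms(3) by (cases "tyof f") auto
  obtain x y' where g: "tyof g = Some (x,y')" using assms(3) f by (cases "tyof g") auto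
  have "y = y'" using assms(3) f g by (auto split: if_splits)
  have f': "tyof f' = Some (y,z)" using assms(1) f EQ_ty by metis
  have g': "tyof g' = Some (x,y')" using assms(2) g EQ_ty by metis
  have "as_eq (Cmp f g) (Cmp f' g')"
    using assms(1,2) unfolding EQ_def
    by (intro as_eq.c_cmp[OF _ _ tyof_sound[OF f] tyof_sound[OF g[unfolded \<open>y = y'\<close>[symmetric]]]]) auto
  then show ?thesis using assms \<open>y = y'\<close> f g f' g' unfolding EQ_def by simp
qed
lemma E_cmpL: "f \<simeq> f' \<Longrightarrow> tyof (Cmp f g) \<noteq> None \<Longrightarrow> Cmp f g \<simeq> Cmp f' g"
  by (rule E_cmp, assumption, rule EQ_refl, auto split: option.splits if_splits)
lemma E_cmpR: "g \<simeq> g' \<Longrightarrow> tyof (Cmp f g) \<noteq> None \<Longrightarrow> Cmp f g \<simeq> Cmp f g'"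
  by (rule E_cmp, rule EQ_refl, auto split: option.splits if_splits)
lemma E_tns: assumes "f \<simeq> f'" "g \<simeq> g'" shows "Tns f g \<simeq> Tns f' g'"
proof -
  obtain y z where f: "tyof f = Some (y,z)" using EQ_tyf[OF assms(1)] by (cases "tyof f") auto
  obtain x y' where g: "tyof g = Some (x,y')" using EQ_tyf[OF assms(2)] by (cases "tyof g") auto
  have f': "tyof f' = Some (y,z)" using assms(1) f EQ_ty by metis
  have g': "tyof g' = Some (x,y')" using assms(2) g EQ_ty by metis
  have "as_eq (Tns f g) (Tns f' g')"
    using assms unfolding EQ_def by (auto intro!: as_eq.c_tns)
  then show ?thesis using f g f' g' unfolding EQ_def by simp
qed
lemma E_tnsL: "f \<simeq> f' \<Longrightarrow> tyof g \<noteq> None \<Longrightarrow> Tns f g \<simeq> Tns f' g"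
  by (rule E_tns, assumption, rule EQ_refl)
lemma E_tnsR: "g \<simeq> g' \<Longrightarrow> tyof f \<noteq> None \<Longrightarrow> Tns f g \<simeq> Tns f g'"
  by (rule E_tns, rule EQ_refl, assumption)
lemma E_ad: assumes "f \<simeq> f'" "g \<simeq> g'" "tyof (Ad f g) \<noteq> None" shows "Ad f g \<simeq> Ad f' g'"
proof -
  obtain y z where f: "tyof f = Some (y,z)" using EQ_tyf[OF assms(1)] by (cases "tyof f") auto
  have g: "tyof g = Some (y,z)" using assms(3) f by (auto split: if_splits)
  have f': "tyof f' = Some (y,z)" using assms(1) f EQ_ty by metis
  have g': "tyof g' = Some (y,z)" using assms(2) g EQ_ty by metis
  have "as_eq (Ad f g) (Ad f' g')"
    using assms(1,2) unfolding EQ_def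
    by (intro as_eq.c_ad[OF _ _ tyof_sound[OF f] tyof_sound[OF g]]) auto
  then show ?thesis using f g f' g' unfolding EQ_def by simp
qed
lemma E_sm: "f \<simeq> f' \<Longrightarrow> Sm c f \<simeq> Sm c f'"
  unfolding EQ_def by (metis tyof.simps(12) as_eq.c_sm)

lemma E_idl: assumes "tyof (Cmp (Idm y) f) \<noteq> None" shows "Cmp (Idm y) f \<simeq> f"
proof -
  obtain x y' where f: "tyof f = Some (x,y')" using assms by (cases "tyof f") (auto split: if_splits)
  show ?thesis using assms f by (intro ax) (auto split: if_splits intro!: as_eq.cat_idl tyof_sound)
qed
lemma E_idr: assumes "tyof (Cmp f (Idm x)) \<noteq> None" shows "Cmp f (Idm x) \<simeq> f"
proof -
  obtain x' y where f: "tyof f = Some (x',y)" using assms by (cases "tyof f") (auto split: if_splits)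
  show ?thesis using assms f by (intro ax) (auto split: if_splits intro!: as_eq.cat_idr tyof_sound)
qed
lemma E_assoc: assumes "tyof (Cmp (Cmp f g) h) \<noteq> None" shows "Cmp (Cmp f g) h \<simeq> Cmp f (Cmp g h)"
proof -
  obtain x1 y1 where f: "tyof f = Some (x1,y1)" using assms by (cases "tyof f") (auto split: if_splits)
  obtain x2 y2 where g: "tyof g = Some (x2,y2)" using assms f by (cases "tyof g") (auto split: if_splits)
  obtain x3 y3 where h: "tyof h = Some (x3,y3)" using assms f g by (cases "tyof h") (auto split: if_splits)
  show ?thesis using assms f g h by (intro ax) (auto split: if_splits intro!: as_eq.cat_assoc tyof_sound)
qed
lemma E_tassoc: assumes "tyof (Tns (Tns f g) h) \<noteq> None" shows "Tns (Tns f g) h \<simeq> Tns f (Tns g h)"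
proof -
  obtain x1 y1 where f: "tyof f = Some (x1,y1)" using assms by (cases "tyof f") (auto split: if_splits)
  obtain x2 y2 where g: "tyof g = Some (x2,y2)" using assms f by (cases "tyof g") (auto split: if_splits)
  obtain x3 y3 where h: "tyof h = Some (x3,y3)" using assms f g by (cases "tyof h") (auto split: if_splits)
  show ?thesis using assms f g h by (intro ax) (auto split: if_splits intro!: as_eq.mon_assoc tyof_sound)
qed
lemma E_unitl: assumes "tyof f \<noteq> None" shows "Tns (Idm []) f \<simeq> f"
proof -
  obtain x1 y1 where f: "tyof f = Some (x1,y1)" using assms by (cases "tyof f") (auto split: if_splits)
  show ?thesis using assms f by (intro ax) (auto simp: validob_def intro!: as_eq.mon_unitl tyof_sound)
qed
lemma E_unitr: assumes "tyof f \<noteq> None" shows "Tns f (Idm []) \<simeq> f"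
proof -
  obtain x1 y1 where f: "tyof f = Some (x1,y1)" using assms by (cases "tyof f") (auto split: if_splits)
  show ?thesis using assms f by (intro ax) (auto simp: validob_def intro!: as_eq.mon_unitr tyof_sound)
qed
lemma E_monid: "validob x \<Longrightarrow> validob y \<Longrightarrow> Tns (Idm x) (Idm y) \<simeq> Idm (x@y)"
  by (rule ax) (auto simp: validob_def intro!: as_eq.mon_id)
lemma E_inter: assumes "tyof (Tns (Cmp f g) (Cmp f' g')) \<noteq> None" shows
   "Tns (Cmp f g) (Cmp f' g') \<simeq> Cmp (Tns f f') (Tns g g')"
proof -
  obtain x1 y1 where f: "tyof f = Some (x1,y1)" using assms by (cases "tyof f") (auto split: if_splits)
  obtain x2 y2 where g: "tyof g = Some (x2,y2)" using assms f by (cases "tyof g") (auto split: if_splits)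
  obtain x3 y3 where f': "tyof f' = Some (x3,y3)" using assms f g by (cases "tyof f'") (auto split: if_splits)
  obtain x4 y4 where g': "tyof g' = Some (x4,y4)" using assms f g f' by (cases "tyof g'") (auto split: if_splits)
  show ?thesis using assms f g f' g' by (intro ax) (auto split: if_splits intro!: as_eq.mon_interchange tyof_sound)
qed



lemma validob_simps[simp]: "validob []" "validob (c # x) \<longleftrightarrow> c \<noteq> Blk 0 \<and> validob x"
  "validob (x @ y) \<longleftrightarrow> validob x \<and> validob y"
  by (auto simp: validob_def)

fun blk :: "'k ob list \<Rightarrow> bool" where
  "blk [] = True" | "blk (Blk n # x) = (n \<ge> 1 \<and> blk x)" | "blk (Red _ # x) = False"

lemma blk_app[simp]: "blk (x @ y) \<longleftrightarrow> blk x \<and> blk y"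
  by (induction x rule: blk.induct) auto
lemma blk_validob[simp]: "blk x \<Longrightarrow> validob x"
  by (induction x rule: blk.induct) auto
lemma blk_tl[simp]: "blk (c # x) \<Longrightarrow> blk x" by (cases c) auto
lemma blk_bk[simp]: "blk (bk a)" by (simp add: bk_def)

fun DA :: "'k \<Rightarrow> 'k ob list \<Rightarrow> 'k mor" where
  "DA u [] = Idm [Red u]"
| "DA u [Blk a] = Dn u a"
| "DA u (Blk a # c # xs) = Cmp (Tns (Idm [Blk a]) (DA u (c#xs))) (Tns (Dn u a) (Idm (c#xs)))"
| "DA u (Red v # xs) = Idm []"

lemma tyof_DA[simp]: "blk x \<Longrightarrow> tyof (DA u x) = Some (Red u # x, x @ [Red u])"
  by (induction u x rule: DA.induct) auto

lemma E_tns_cmp_id_r: "tyof (Cmp f g) \<noteq> None \<Longrightarrow> validob z \<Longrightarrow>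
  Tns (Cmp f g) (Idm z) \<simeq> Cmp (Tns f (Idm z)) (Tns g (Idm z))"
proof -
  assume a: "tyof (Cmp f g) \<noteq> None" "validob z"
  have "Tns (Cmp f g) (Idm z) \<simeq> Tns (Cmp f g) (Cmp (Idm z) (Idm z))"
    by (rule E_tnsR[OF EQ_sym[OF E_idl]]) (use a in simp_all)
  also have "\<dots> \<simeq> Cmp (Tns f (Idm z)) (Tns g (Idm z))"
    by (rule E_inter) (use a in \<open>auto split: option.splits if_splits\<close>)
  finally show ?thesis .
qed

lemma E_tns_cmp_id_l: "tyof (Cmp f g) \<noteq> None \<Longrightarrow> validob z \<Longrightarrow>
  Tns (Idm z) (Cmp f g) \<simeq> Cmp (Tns (Idm z) f) (Tns (Idm z) g)"
proof -
  assume a: "tyof (Cmp f g) \<noteq> None" "validob z"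
  have "Tns (Idm z) (Cmp f g) \<simeq> Tns (Cmp (Idm z) (Idm z)) (Cmp f g)"
    by (rule E_tnsL[OF EQ_sym[OF E_idl]]) (use a in simp_all)
  also have "\<dots> \<simeq> Cmp (Tns (Idm z) f) (Tns (Idm z) g)"
    by (rule E_inter) (use a in \<open>auto split: option.splits if_splits\<close>)
  finally show ?thesis .
qed

lemma DA_cons: "blk (Blk a # x) \<Longrightarrow> DA u (Blk a # x) \<simeq> Cmp (Tns (Idm [Blk a]) (DA u x)) (Tns (Dn u a) (Idm x))"
proof (cases x)
  case Nil
  assume a: "blk (Blk a # x)"
  have "Cmp (Tns (Idm [Blk a]) (Idm [Red u])) (Tns (Dn u a) (Idm [])) \<simeq> Cmp (Idm ([Blk a] @ [Red u])) (Tns (Dn u a) (Idm []))"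
    by (rule E_cmpL[OF E_monid]) (use a Nil in simp_all)
  also have "\<dots> \<simeq> Cmp (Idm ([Blk a] @ [Red u])) (Dn u a)"
    by (rule E_cmpR[OF E_unitr]) (use a Nil in simp_all)
  also have "\<dots> \<simeq> Dn u a"
    by (rule E_idl) (use a Nil in simp_all)
  finally show ?thesis using Nil by (simp add: EQ_sym)
next
  case (Cons c xs)
  assume a: "blk (Blk a # x)"
  then show ?thesis using Cons by (cases c) (auto intro!: EQ_refl)
qed


lemma E_monid': "validob x \<Longrightarrow> validob y \<Longrightarrow> z = x @ y \<Longrightarrow> Tns (Idm x) (Idm y) \<simeq> Idm z"
  using E_monid by blast

lemma DA_app: "blk x \<Longrightarrow> blk x' \<Longrightarrow>
  DA u (x @ x') \<simeq> Cmp (Tns (Idm x) (DA u x')) (Tns (DA u x) (Idm x'))"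
proof (induction x)
  case Nil
  have "Cmp (Tns (Idm []) (DA u x')) (Tns (Idm [Red u]) (Idm x')) \<simeq> Cmp (DA u x') (Tns (Idm [Red u]) (Idm x'))"
    by (rule E_cmpL[OF E_unitl]) (use Nil in simp_all)
  also have "\<dots> \<simeq> Cmp (DA u x') (Idm (Red u # x'))"
    by (rule E_cmpR[OF E_monid']) (use Nil in simp_all)
  also have "\<dots> \<simeq> DA u x'"
    by (rule E_idr) (use Nil in simp_all)
  finally show ?case by (simp add: EQ_sym)
next
  case (Cons c x1)
  then obtain a where c: "c = Blk a" and a: "a \<ge> 1" and b1: "blk x1" by (cases c) auto
  note bb = Cons.prems a b1
  have "DA u (c # x1 @ x') \<simeq> Cmp (Tns (Idm [Blk a]) (DA u (x1@x'))) (Tns (Dn u a) (Idm (x1@x')))"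
    unfolding c by (rule DA_cons) (use bb in simp)
  also have "\<dots> \<simeq> Cmp (Tns (Idm [Blk a]) (Cmp (Tns (Idm x1) (DA u x')) (Tns (DA u x1) (Idm x')))) (Tns (Dn u a) (Idm (x1@x')))"
    by (rule E_cmpL[OF E_tnsR[OF Cons.IH]]) (use bb in simp_all)
  also have "\<dots> \<simeq> Cmp (Cmp (Tns (Idm [Blk a]) (Tns (Idm x1) (DA u x'))) (Tns (Idm [Blk a]) (Tns (DA u x1) (Idm x')))) (Tns (Dn u a) (Idm (x1@x')))"
    by (rule E_cmpL[OF E_tns_cmp_id_l]) (use bb in simp_all)
  also have "\<dots> \<simeq> Cmp (Tns (Idm [Blk a]) (Tns (Idm x1) (DA u x'))) (Cmp (Tns (Idm [Blk a]) (Tns (DA u x1) (Idm x'))) (Tns (Dn u a) (Idm (x1@x'))))"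
    by (rule E_assoc) (use bb in simp_all)
  finally have L: "DA u (c # x1 @ x') \<simeq> \<dots>" .
  have "Cmp (Tns (Idm (c#x1)) (DA u x')) (Tns (DA u (c#x1)) (Idm x')) \<simeq>
        Cmp (Tns (Idm (c#x1)) (DA u x')) (Tns (Cmp (Tns (Idm [Blk a]) (DA u x1)) (Tns (Dn u a) (Idm x1))) (Idm x'))"
    unfolding c by (rule E_cmpR[OF E_tnsL[OF DA_cons]]) (use bb in simp_all)
  also have "\<dots> \<simeq> Cmp (Tns (Idm (c#x1)) (DA u x')) (Cmp (Tns (Tns (Idm [Blk a]) (DA u x1)) (Idm x')) (Tns (Tns (Dn u a) (Idm x1)) (Idm x')))"
    by (rule E_cmpR[OF E_tns_cmp_id_r]) (use bb c in simp_all)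
  also have "\<dots> \<simeq> Cmp (Tns (Idm [Blk a]) (Tns (Idm x1) (DA u x'))) (Cmp (Tns (Idm [Blk a]) (Tns (DA u x1) (Idm x'))) (Tns (Dn u a) (Idm (x1@x'))))"
  proof (rule E_cmp[OF _ E_cmp])
    have "Tns (Idm (c#x1)) (DA u x') \<simeq> Tns (Tns (Idm [Blk a]) (Idm x1)) (DA u x')"
      by (rule E_tnsL[OF EQ_sym[OF E_monid']]) (use bb c in simp_all)
    also have "\<dots> \<simeq> Tns (Idm [Blk a]) (Tns (Idm x1) (DA u x'))"
      by (rule E_tassoc) (use bb in simp_all)
    finally show "Tns (Idm (c#x1)) (DA u x') \<simeq> \<dots>" .
    show "Tns (Tns (Idm [Blk a]) (DA u x1)) (Idm x') \<simeq> Tns (Idm [Blk a]) (Tns (DA u x1) (Idm x'))"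
      by (rule E_tassoc) (use bb in simp_all)
    have "Tns (Tns (Dn u a) (Idm x1)) (Idm x') \<simeq> Tns (Dn u a) (Tns (Idm x1) (Idm x'))"
      by (rule E_tassoc) (use bb in simp_all)
    also have "\<dots> \<simeq> Tns (Dn u a) (Idm (x1@x'))"
      by (rule E_tnsR[OF E_monid']) (use bb in simp_all)
    finally show "Tns (Tns (Dn u a) (Idm x1)) (Idm x') \<simeq> \<dots>" .
  qed (use bb c in simp_all)
  finally have R: "Cmp (Tns (Idm (c#x1)) (DA u x')) (Tns (DA u (c#x1)) (Idm x')) \<simeq> \<dots>" .
  show ?case using L EQ_sym[OF R] by (simp add: EQ_trans)
qed



lemma tyof_valid: "tyof f = Some (x,y) \<Longrightarrow> validob x \<and> validob y"
  by (induction f arbitrary: x y) (auto split: if_splits option.splits, metis+)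
lemma tyof_valid1: "tyof f = Some (x,y) \<Longrightarrow> validob x" using tyof_valid by blast
lemma tyof_valid2: "tyof f = Some (x,y) \<Longrightarrow> validob y" using tyof_valid by blast

lemma E_tns_addl: assumes "tyof (Tns (Ad f f') g) \<noteq> None"
  shows "Tns (Ad f f') g \<simeq> Ad (Tns f g) (Tns f' g)"
proof -
  obtain x1 y1 where f: "tyof f = Some (x1,y1)" using assms by (cases "tyof f") (auto split: if_splits option.splits)
  obtain x2 y2 where g: "tyof g = Some (x2,y2)" using assms f by (cases "tyof g") (auto split: if_splits option.splits)
  have f': "tyof f' = Some (x1,y1)" using assms f by (auto split: if_splits option.splits)
  show ?thesis using f g f' by (intro ax) (auto intro!: as_eq.bil_tns_addl tyof_sound)
qed
lemma E_tns_addr: assumes "tyof (Tns f (Ad g g')) \<noteq> None"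
  shows "Tns f (Ad g g') \<simeq> Ad (Tns f g) (Tns f g')"
proof -
  obtain x1 y1 where f: "tyof f = Some (x1,y1)" using assms by (cases "tyof f") (auto split: if_splits option.splits)
  obtain x2 y2 where g: "tyof g = Some (x2,y2)" using assms f by (cases "tyof g") (auto split: if_splits option.splits)
  have g': "tyof g' = Some (x2,y2)" using assms f g by (auto split: if_splits option.splits)
  show ?thesis using f g g' by (intro ax) (auto intro!: as_eq.bil_tns_addr tyof_sound)
qed
lemma E_cmp_addl: assumes "tyof (Cmp (Ad f f') g) \<noteq> None"
  shows "Cmp (Ad f f') g \<simeq> Ad (Cmp f g) (Cmp f' g)"
proof -
  obtain x1 y1 where f: "tyof f = Some (x1,y1)" using assms by (cases "tyof f") (auto split: if_splits option.splits)
  obtain x2 y2 where g: "tyof g = Some (x2,y2)" using assms f by (cases "tyof g") (auto split: if_splits option.splits)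
  have f': "tyof f' = Some (x1,y1)" using assms f by (auto split: if_splits option.splits)
  have "y2 = x1" using assms f g f' by (auto split: if_splits option.splits)
  then show ?thesis using f g f' by (intro ax) (auto intro!: as_eq.bil_cmp_addl tyof_sound)
qed
lemma E_cmp_addr: assumes "tyof (Cmp f (Ad g g')) \<noteq> None"
  shows "Cmp f (Ad g g') \<simeq> Ad (Cmp f g) (Cmp f g')"
proof -
  obtain x1 y1 where f: "tyof f = Some (x1,y1)" using assms by (cases "tyof f") (auto split: if_splits option.splits)
  obtain x2 y2 where g: "tyof g = Some (x2,y2)" using assms f by (cases "tyof g") (auto split: if_splits option.splits)
  have g': "tyof g' = Some (x2,y2)" using assms f g by (auto split: if_splits option.splits)
  have "y2 = x1" using assms f g g' by (auto split: if_splits option.splits)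
  then show ?thesis using f g g' by (intro ax) (auto intro!: as_eq.bil_cmp_addr tyof_sound)
qed
lemma E_tns_sml: assumes "tyof (Tns (Sm c f) g) \<noteq> None"
  shows "Tns (Sm c f) g \<simeq> Sm c (Tns f g)"
proof -
  obtain x1 y1 where f: "tyof f = Some (x1,y1)" using assms by (cases "tyof f") (auto split: if_splits option.splits)
  obtain x2 y2 where g: "tyof g = Some (x2,y2)" using assms f by (cases "tyof g") (auto split: if_splits option.splits)
  show ?thesis using f g by (intro ax) (auto intro!: as_eq.bil_tns_sml tyof_sound)
qed
lemma E_tns_smr: assumes "tyof (Tns f (Sm c g)) \<noteq> None"
  shows "Tns f (Sm c g) \<simeq> Sm c (Tns f g)"
proof -
  obtain x1 y1 where f: "tyof f = Some (x1,y1)" using assms by (cases "tyof f") (auto split: if_splits option.splits)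
  obtain x2 y2 where g: "tyof g = Some (x2,y2)" using assms f by (cases "tyof g") (auto split: if_splits option.splits)
  show ?thesis using f g by (intro ax) (auto intro!: as_eq.bil_tns_smr tyof_sound)
qed
lemma E_cmp_sml: assumes "tyof (Cmp (Sm c f) g) \<noteq> None"
  shows "Cmp (Sm c f) g \<simeq> Sm c (Cmp f g)"
proof -
  obtain x1 y1 where f: "tyof f = Some (x1,y1)" using assms by (cases "tyof f") (auto split: if_splits option.splits)
  obtain x2 y2 where g: "tyof g = Some (x2,y2)" using assms f by (cases "tyof g") (auto split: if_splits option.splits)
  have "y2 = x1" using assms f g by (auto split: if_splits option.splits)
  then show ?thesis using f g by (intro ax) (auto intro!: as_eq.bil_cmp_sml tyof_sound)
qed
lemma E_cmp_smr: assumes "tyof (Cmp f (Sm c g)) \<noteq> None"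
  shows "Cmp f (Sm c g) \<simeq> Sm c (Cmp f g)"
proof -
  obtain x1 y1 where f: "tyof f = Some (x1,y1)" using assms by (cases "tyof f") (auto split: if_splits option.splits)
  obtain x2 y2 where g: "tyof g = Some (x2,y2)" using assms f by (cases "tyof g") (auto split: if_splits option.splits)
  have "y2 = x1" using assms f g by (auto split: if_splits option.splits)
  then show ?thesis using f g by (intro ax) (auto intro!: as_eq.bil_cmp_smr tyof_sound)
qed
lemma E_cmp_zrl: assumes "tyof (Cmp (Zr y z) g) \<noteq> None" and "tyof g = Some (x, y)"
  shows "Cmp (Zr y z) g \<simeq> Zr x z"
  using assms by (intro ax) (auto dest: tyof_valid1 tyof_valid2 split: if_splits intro!: as_eq.bil_cmp_zrl tyof_sound)
lemma E_cmp_zrr: assumes "tyof (Cmp f (Zr x y)) \<noteq> None" and "tyof f = Some (y, z)"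
  shows "Cmp f (Zr x y) \<simeq> Zr x z"
  using assms by (intro ax) (auto dest: tyof_valid1 tyof_valid2 split: if_splits intro!: as_eq.bil_cmp_zrr tyof_sound)
lemma E_tns_zrl: assumes "tyof g = Some (x', y')" "validob x" "validob y"
  shows "Tns (Zr x y) g \<simeq> Zr (x@x') (y@y')"
  using assms by (intro ax) (auto dest: tyof_valid1 tyof_valid2 split: if_splits intro!: as_eq.bil_tns_zrl tyof_sound)
lemma E_tns_zrr: assumes "tyof f = Some (x, y)" "validob x'" "validob y'"
  shows "Tns f (Zr x' y') \<simeq> Zr (x@x') (y@y')"
  using assms by (intro ax) (auto dest: tyof_valid1 tyof_valid2 split: if_splits intro!: as_eq.bil_tns_zrr tyof_sound)
lemma E_add_assoc: assumes "tyof (Ad (Ad f g) h) \<noteq> None"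
  shows "Ad (Ad f g) h \<simeq> Ad f (Ad g h)"
proof -
  obtain x1 y1 where f: "tyof f = Some (x1,y1)" using assms by (cases "tyof f") (auto split: if_splits option.splits)
  have g: "tyof g = Some (x1,y1)" "tyof h = Some (x1,y1)" using assms f by (auto split: if_splits)
  show ?thesis using f g by (intro ax) (auto intro!: as_eq.lin_add_assoc tyof_sound)
qed
lemma E_add_comm: assumes "tyof (Ad f g) \<noteq> None"
  shows "Ad f g \<simeq> Ad g f"
proof -
  obtain x1 y1 where f: "tyof f = Some (x1,y1)" using assms by (cases "tyof f") (auto split: if_splits option.splits)
  have g: "tyof g = Some (x1,y1)" using assms f by (auto split: if_splits)
  show ?thesis using f g by (intro ax) (auto intro!: as_eq.lin_add_comm tyof_sound)
qed
lemma E_add_zero: assumes "tyof f = Some (x,y)"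
  shows "Ad f (Zr x y) \<simeq> f"
  using assms tyof_sound[OF assms] tyof_valid[OF assms] by (intro ax) (auto intro!: as_eq.lin_add_zero hty.intros)
lemma E_add_neg: assumes "tyof f = Some (x,y)"
  shows "Ad f (Sm (-1) f) \<simeq> Zr x y"
proof -
  have "validob x \<and> validob y" using tyof_valid[OF assms] .
  then show ?thesis using assms by (intro ax) (auto intro!: as_eq.lin_add_neg tyof_sound)
qed



definition natD :: "'k::comm_ring_1 \<Rightarrow> 'k mor \<Rightarrow> 'k ob list \<Rightarrow> 'k ob list \<Rightarrow> bool" where
  "natD u f x y \<longleftrightarrow> blk x \<and> blk y \<and> tyof f = Some (x,y) \<and>
     Cmp (Tns f (Idm [Red u])) (DA u x) \<simeq> Cmp (DA u y) (Tns (Idm [Red u]) f)"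

lemma natD_ty: "natD u f x y \<Longrightarrow> x = x' \<Longrightarrow> y = y' \<Longrightarrow> natD u f x' y'" by simp

lemma natD_cong: assumes "natD u f x y" "f \<simeq> g" shows "natD u g x y"
proof -
  have t: "tyof f = Some (x,y)" "blk x" "blk y" and n: "Cmp (Tns f (Idm [Red u])) (DA u x) \<simeq> Cmp (DA u y) (Tns (Idm [Red u]) f)"
    using assms(1) unfolding natD_def by auto
  have tg: "tyof g = Some (x,y)" using EQ_ty[OF assms(2)] t by simp
  have "Cmp (Tns g (Idm [Red u])) (DA u x) \<simeq> Cmp (Tns f (Idm [Red u])) (DA u x)"
    by (rule E_cmpL[OF E_tnsL[OF EQ_sym[OF assms(2)]]]) (use t tg in simp_all)
  also note n
  also have "Cmp (DA u y) (Tns (Idm [Red u]) f) \<simeq> Cmp (DA u y) (Tns (Idm [Red u]) g)"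
    by (rule E_cmpR[OF E_tnsR[OF assms(2)]]) (use t tg in simp_all)
  finally show ?thesis using t tg unfolding natD_def by simp
qed

lemma natD_Idm: assumes "blk x" shows "natD u (Idm x) x x"
proof -
  have "Cmp (Tns (Idm x) (Idm [Red u])) (DA u x) \<simeq> Cmp (Idm (x @ [Red u])) (DA u x)"
    by (rule E_cmpL[OF E_monid]) (use assms in simp_all)
  also have "\<dots> \<simeq> DA u x" by (rule E_idl) (use assms in simp_all)
  also have "\<dots> \<simeq> Cmp (DA u x) (Idm (Red u # x))" by (rule EQ_sym[OF E_idr]) (use assms in simp_all)
  also have "\<dots> \<simeq> Cmp (DA u x) (Tns (Idm [Red u]) (Idm x))"
    by (rule E_cmpR[OF EQ_sym[OF E_monid']]) (use assms in simp_all)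
  finally show ?thesis using assms unfolding natD_def by simp
qed

lemma natD_cmp: assumes f: "natD u f y z" and g: "natD u g x y" shows "natD u (Cmp f g) x z"
proof -
  have tf: "tyof f = Some (y,z)" "blk y" "blk z" and nf: "Cmp (Tns f (Idm [Red u])) (DA u y) \<simeq> Cmp (DA u z) (Tns (Idm [Red u]) f)"
    using f unfolding natD_def by auto
  have tg: "tyof g = Some (x,y)" "blk x" and ng: "Cmp (Tns g (Idm [Red u])) (DA u x) \<simeq> Cmp (DA u y) (Tns (Idm [Red u]) g)"
    using g unfolding natD_def by auto
  note t = tf tg
  have "Cmp (Tns (Cmp f g) (Idm [Red u])) (DA u x) \<simeq> Cmp (Cmp (Tns f (Idm [Red u])) (Tns g (Idm [Red u]))) (DA u x)"
    by (rule E_cmpL[OF E_tns_cmp_id_r]) (use t in simp_all)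
  also have "\<dots> \<simeq> Cmp (Tns f (Idm [Red u])) (Cmp (Tns g (Idm [Red u])) (DA u x))"
    by (rule E_assoc) (use t in simp_all)
  also have "\<dots> \<simeq> Cmp (Tns f (Idm [Red u])) (Cmp (DA u y) (Tns (Idm [Red u]) g))"
    by (rule E_cmpR[OF ng]) (use t in simp_all)
  also have "\<dots> \<simeq> Cmp (Cmp (Tns f (Idm [Red u])) (DA u y)) (Tns (Idm [Red u]) g)"
    by (rule EQ_sym[OF E_assoc]) (use t in simp_all)
  also have "\<dots> \<simeq> Cmp (Cmp (DA u z) (Tns (Idm [Red u]) f)) (Tns (Idm [Red u]) g)"
    by (rule E_cmpL[OF nf]) (use t in simp_all)
  also have "\<dots> \<simeq> Cmp (DA u z) (Cmp (Tns (Idm [Red u]) f) (Tns (Idm [Red u]) g))"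
    by (rule E_assoc) (use t in simp_all)
  also have "\<dots> \<simeq> Cmp (DA u z) (Tns (Idm [Red u]) (Cmp f g))"
    by (rule E_cmpR[OF EQ_sym[OF E_tns_cmp_id_l]]) (use t in simp_all)
  finally show ?thesis using t unfolding natD_def by simp
qed

lemma natD_cmp': "natD u f y z \<Longrightarrow> natD u g x y' \<Longrightarrow> y = y' \<Longrightarrow> natD u (Cmp f g) x z"
  using natD_cmp by blast


lemma natD_tns: assumes f: "natD u f x y" and g: "natD u g x' y'" shows "natD u (Tns f g) (x@x') (y@y')"
proof -
  have tf: "tyof f = Some (x,y)" "blk x" "blk y" and nf: "Cmp (Tns f (Idm [Red u])) (DA u x) \<simeq> Cmp (DA u y) (Tns (Idm [Red u]) f)"
    using f unfolding natD_def by auto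
  have tg: "tyof g = Some (x',y')" "blk x'" "blk y'" and ng: "Cmp (Tns g (Idm [Red u])) (DA u x') \<simeq> Cmp (DA u y') (Tns (Idm [Red u]) g)"
    using g unfolding natD_def by auto
  note t = tf tg
  have s4: "Cmp (Tns f (Tns g (Idm [Red u]))) (Tns (Idm x) (DA u x')) \<simeq> Cmp (Tns (Idm y) (DA u y')) (Tns f (Tns (Idm [Red u]) g))"
  proof -
    have "Cmp (Tns f (Tns g (Idm [Red u]))) (Tns (Idm x) (DA u x')) \<simeq> Tns (Cmp f (Idm x)) (Cmp (Tns g (Idm [Red u])) (DA u x'))"
      by (rule EQ_sym[OF E_inter]) (use t in simp_all)
    also have "\<dots> \<simeq> Tns f (Cmp (Tns g (Idm [Red u])) (DA u x'))"
      by (rule E_tnsL[OF E_idr]) (use t in simp_all)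
    also have "\<dots> \<simeq> Tns f (Cmp (DA u y') (Tns (Idm [Red u]) g))"
      by (rule E_tnsR[OF ng]) (use t in simp_all)
    also have "\<dots> \<simeq> Tns (Cmp (Idm y) f) (Cmp (DA u y') (Tns (Idm [Red u]) g))"
      by (rule E_tnsL[OF EQ_sym[OF E_idl]]) (use t in simp_all)
    also have "\<dots> \<simeq> Cmp (Tns (Idm y) (DA u y')) (Tns f (Tns (Idm [Red u]) g))"
      by (rule E_inter) (use t in simp_all)
    finally show ?thesis .
  qed
  have s6: "Cmp (Tns f (Tns (Idm [Red u]) g)) (Tns (DA u x) (Idm x')) \<simeq> Cmp (Tns (DA u y) (Idm y')) (Tns (Tns (Idm [Red u]) f) g)"
  proof -
    have "Cmp (Tns f (Tns (Idm [Red u]) g)) (Tns (DA u x) (Idm x')) \<simeq> Cmp (Tns (Tns f (Idm [Red u])) g) (Tns (DA u x) (Idm x'))"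
      by (rule E_cmpL[OF EQ_sym[OF E_tassoc]]) (use t in simp_all)
    also have "\<dots> \<simeq> Tns (Cmp (Tns f (Idm [Red u])) (DA u x)) (Cmp g (Idm x'))"
      by (rule EQ_sym[OF E_inter]) (use t in simp_all)
    also have "\<dots> \<simeq> Tns (Cmp (DA u y) (Tns (Idm [Red u]) f)) (Cmp g (Idm x'))"
      by (rule E_tnsL[OF nf]) (use t in simp_all)
    also have "\<dots> \<simeq> Tns (Cmp (DA u y) (Tns (Idm [Red u]) f)) g"
      by (rule E_tnsR[OF E_idr]) (use t in simp_all)
    also have "\<dots> \<simeq> Tns (Cmp (DA u y) (Tns (Idm [Red u]) f)) (Cmp (Idm y') g)"
      by (rule E_tnsR[OF EQ_sym[OF E_idl]]) (use t in simp_all)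
    also have "\<dots> \<simeq> Cmp (Tns (DA u y) (Idm y')) (Tns (Tns (Idm [Red u]) f) g)"
      by (rule E_inter) (use t in simp_all)
    finally show ?thesis .
  qed
  have "Cmp (Tns (Tns f g) (Idm [Red u])) (DA u (x@x')) \<simeq> Cmp (Tns (Tns f g) (Idm [Red u])) (Cmp (Tns (Idm x) (DA u x')) (Tns (DA u x) (Idm x')))"
    by (rule E_cmpR[OF DA_app]) (use t in simp_all)
  also have "\<dots> \<simeq> Cmp (Tns f (Tns g (Idm [Red u]))) (Cmp (Tns (Idm x) (DA u x')) (Tns (DA u x) (Idm x')))"
    by (rule E_cmpL[OF E_tassoc]) (use t in simp_all)
  also have "\<dots> \<simeq> Cmp (Cmp (Tns f (Tns g (Idm [Red u]))) (Tns (Idm x) (DA u x'))) (Tns (DA u x) (Idm x'))"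
    by (rule EQ_sym[OF E_assoc]) (use t in simp_all)
  also have "\<dots> \<simeq> Cmp (Cmp (Tns (Idm y) (DA u y')) (Tns f (Tns (Idm [Red u]) g))) (Tns (DA u x) (Idm x'))"
    by (rule E_cmpL[OF s4]) (use t in simp_all)
  also have "\<dots> \<simeq> Cmp (Tns (Idm y) (DA u y')) (Cmp (Tns f (Tns (Idm [Red u]) g)) (Tns (DA u x) (Idm x')))"
    by (rule E_assoc) (use t in simp_all)
  also have "\<dots> \<simeq> Cmp (Tns (Idm y) (DA u y')) (Cmp (Tns (DA u y) (Idm y')) (Tns (Tns (Idm [Red u]) f) g))"
    by (rule E_cmpR[OF s6]) (use t in simp_all)
  also have "\<dots> \<simeq> Cmp (Cmp (Tns (Idm y) (DA u y')) (Tns (DA u y) (Idm y'))) (Tns (Tns (Idm [Red u]) f) g)"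
    by (rule EQ_sym[OF E_assoc]) (use t in simp_all)
  also have "\<dots> \<simeq> Cmp (DA u (y@y')) (Tns (Tns (Idm [Red u]) f) g)"
    by (rule E_cmpL[OF EQ_sym[OF DA_app]]) (use t in simp_all)
  also have "\<dots> \<simeq> Cmp (DA u (y@y')) (Tns (Idm [Red u]) (Tns f g))"
    by (rule E_cmpR[OF E_tassoc]) (use t in simp_all)
  finally show ?thesis using t unfolding natD_def by simp
qed

lemma natD_tns': "natD u f x y \<Longrightarrow> natD u g x' y' \<Longrightarrow> X = x@x' \<Longrightarrow> Y = y@y' \<Longrightarrow> natD u (Tns f g) X Y"
  using natD_tns by blast

lemma natD_ad: assumes f: "natD u f x y" and g: "natD u g x y" shows "natD u (Ad f g) x y"
proof -
  have tf: "tyof f = Some (x,y)" "blk x" "blk y" and nf: "Cmp (Tns f (Idm [Red u])) (DA u x) \<simeq> Cmp (DA u y) (Tns (Idm [Red u]) f)"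
    using f unfolding natD_def by auto
  have tg: "tyof g = Some (x,y)" and ng: "Cmp (Tns g (Idm [Red u])) (DA u x) \<simeq> Cmp (DA u y) (Tns (Idm [Red u]) g)"
    using g unfolding natD_def by auto
  note t = tf tg
  have "Cmp (Tns (Ad f g) (Idm [Red u])) (DA u x) \<simeq> Cmp (Ad (Tns f (Idm [Red u])) (Tns g (Idm [Red u]))) (DA u x)"
    by (rule E_cmpL[OF E_tns_addl]) (use t in simp_all)
  also have "\<dots> \<simeq> Ad (Cmp (Tns f (Idm [Red u])) (DA u x)) (Cmp (Tns g (Idm [Red u])) (DA u x))"
    by (rule E_cmp_addl) (use t in simp_all)
  also have "\<dots> \<simeq> Ad (Cmp (DA u y) (Tns (Idm [Red u]) f)) (Cmp (DA u y) (Tns (Idm [Red u]) g))"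
    by (rule E_ad[OF nf ng]) (use t in simp_all)
  also have "\<dots> \<simeq> Cmp (DA u y) (Ad (Tns (Idm [Red u]) f) (Tns (Idm [Red u]) g))"
    by (rule EQ_sym[OF E_cmp_addr]) (use t in simp_all)
  also have "\<dots> \<simeq> Cmp (DA u y) (Tns (Idm [Red u]) (Ad f g))"
    by (rule E_cmpR[OF EQ_sym[OF E_tns_addr]]) (use t in simp_all)
  finally show ?thesis using t unfolding natD_def by simp
qed

lemma natD_sm: assumes f: "natD u f x y" shows "natD u (Sm c f) x y"
proof -
  have t: "tyof f = Some (x,y)" "blk x" "blk y" and nf: "Cmp (Tns f (Idm [Red u])) (DA u x) \<simeq> Cmp (DA u y) (Tns (Idm [Red u]) f)"
    using f unfolding natD_def by auto
  have "Cmp (Tns (Sm c f) (Idm [Red u])) (DA u x) \<simeq> Cmp (Sm c (Tns f (Idm [Red u]))) (DA u x)"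
    by (rule E_cmpL[OF E_tns_sml]) (use t in simp_all)
  also have "\<dots> \<simeq> Sm c (Cmp (Tns f (Idm [Red u])) (DA u x))"
    by (rule E_cmp_sml) (use t in simp_all)
  also have "\<dots> \<simeq> Sm c (Cmp (DA u y) (Tns (Idm [Red u]) f))"
    by (rule E_sm[OF nf])
  also have "\<dots> \<simeq> Cmp (DA u y) (Sm c (Tns (Idm [Red u]) f))"
    by (rule EQ_sym[OF E_cmp_smr]) (use t in simp_all)
  also have "\<dots> \<simeq> Cmp (DA u y) (Tns (Idm [Red u]) (Sm c f))"
    by (rule E_cmpR[OF EQ_sym[OF E_tns_smr]]) (use t in simp_all)
  finally show ?thesis using t unfolding natD_def by simp
qed

lemma natD_zr: assumes t: "blk x" "blk y" shows "natD u (Zr x y) x y"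
proof -
  have "Cmp (Tns (Zr x y) (Idm [Red u])) (DA u x) \<simeq> Cmp (Zr (x @ [Red u]) (y @ [Red u])) (DA u x)"
    by (rule E_cmpL[OF E_tns_zrl]) (use t in simp_all)
  also have "\<dots> \<simeq> Zr ([Red u] @ x) (y @ [Red u])"
    by (rule E_cmp_zrl) (use t in simp_all)
  also have "\<dots> \<simeq> Cmp (DA u y) (Zr ([Red u] @ x) ([Red u] @ y))"
    by (rule EQ_sym[OF E_cmp_zrr]) (use t in simp_all)
  also have "\<dots> \<simeq> Cmp (DA u y) (Tns (Idm [Red u]) (Zr x y))"
    by (rule E_cmpR[OF EQ_sym[OF E_tns_zrr]]) (use t in simp_all)
  finally show ?thesis using t unfolding natD_def by simp
qed

lemma msum_Nil[simp]: "msum x y [] = Zr x y" by (simp add: msum_def)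
lemma msum_Cons[simp]: "msum x y (t # ts) = Ad t (msum x y ts)" by (simp add: msum_def)

lemma natD_msum: "blk x \<Longrightarrow> blk y \<Longrightarrow> (\<And>t. t \<in> set ts \<Longrightarrow> natD u t x y) \<Longrightarrow> natD u (msum x y ts) x y"
  by (induction ts) (auto intro: natD_zr natD_ad)



lemma filt_diag: "s < n \<Longrightarrow> [(s,t). t \<leftarrow> [0..<n], int t - int s = int a - int a] = [(s,s)]"
proof (induction n)
  case 0 then show ?case by simp
next
  case (Suc n)
  then show ?case by (cases "s < n") auto
qed

lemma filt_diag2: "s < n \<Longrightarrow> concat (map (\<lambda>t. if t = s then [(s, t)] else []) [0..<n]) = [(s,s)]"
proof (induction n)
  case 0 then show ?case by simp
next
  case (Suc n)
  then show ?case by (cases "s < n") auto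
qed

lemma R2rhs_diag: "R2rhs a b b a = msum [Blk a, Blk b] [Blk b, Blk a]
  (map (\<lambda>s. Cmp (Cmp (Tns (mM s (b-s)) (mM (a-s) s)) (Tns (Tns (idb s) (mX (a-s) (b-s))) (idb s)))
                       (Tns (mS s (a-s)) (mS (b-s) s))) [0..<Suc (min a b)])"
proof -
  have "[(s,t). s \<leftarrow> [0..<Suc (min a b)], t \<leftarrow> [0..<Suc (min b a)], int t - int s = int a - int a]
      = map (\<lambda>s. (s,s)) [0..<Suc (min a b)]"
    by (rule trans[OF arg_cong[where f=concat] concat_map_singleton], rule map_cong)
       (auto simp: min.commute filt_diag2)
  then show ?thesis unfolding R2rhs_def by (simp only: map_map comp_def prod.case)
qed


lemma bk_simps[simp]: "bk 0 = []" "a \<ge> 1 \<Longrightarrow> bk a = [Blk a]" by (auto simp: bk_def)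

lemma natD_Mg: assumes ab: "a \<ge> 1" "b \<ge> 1" shows "natD u (Mg a b) [Blk a, Blk b] [Blk (a+b)]"
proof -
  have r: "Cmp (Dn u (a+b)) (Tns (Idm [Red u]) (Mg a b)) \<simeq>
     Cmp (Cmp (Tns (Mg a b) (Idm [Red u])) (Tns (Idm [Blk a]) (Dn u b))) (Tns (Dn u a) (Idm [Blk b]))"
    using as_eq.R9c[OF ab, of u] ab by (intro ax) (simp_all add: mD_def mM_def idb_def)
  have "Cmp (Tns (Mg a b) (Idm [Red u])) (DA u [Blk a, Blk b]) \<simeq>
     Cmp (Cmp (Tns (Mg a b) (Idm [Red u])) (Tns (Idm [Blk a]) (Dn u b))) (Tns (Dn u a) (Idm [Blk b]))"
    by (simp, rule EQ_sym[OF E_assoc]) (use ab in simp_all)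
  also note EQ_sym[OF r]
  finally show ?thesis using ab unfolding natD_def by simp
qed

lemma natD_Sp: assumes ab: "a \<ge> 1" "b \<ge> 1" shows "natD u (Sp a b) [Blk (a+b)] [Blk a, Blk b]"
proof -
  have r: "Cmp (Tns (Sp a b) (Idm [Red u])) (Dn u (a+b)) \<simeq>
     Cmp (Cmp (Tns (Idm [Blk a]) (Dn u b)) (Tns (Dn u a) (Idm [Blk b]))) (Tns (Idm [Red u]) (Sp a b))"
    using as_eq.R9b[OF ab, of u] ab by (intro ax) (simp_all add: mD_def mS_def idb_def)
  then show ?thesis using ab unfolding natD_def by simp
qed

lemma natD_mM: "natD u (mM s t) (bk s @ bk t) (bk (s+t))"
proof (cases "s = 0 \<or> t = 0")
  case True
  then show ?thesis using natD_Idm[of "bk (s+t)" u] by (auto simp: mM_def idb_def)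
next
  case False
  then show ?thesis using natD_Mg[of s t u] by (simp add: mM_def)
qed

lemma natD_mS: "natD u (mS s t) (bk (s+t)) (bk s @ bk t)"
proof (cases "s = 0 \<or> t = 0")
  case True
  then show ?thesis using natD_Idm[of "bk (s+t)" u] by (auto simp: mS_def idb_def)
next
  case False
  then show ?thesis using natD_Sp[of s t u] by (simp add: mS_def)
qed

lemma natD_idb: "natD u (idb s) (bk s) (bk s)"
  using natD_Idm[of "bk s" u] by (simp add: idb_def)

lemma natD_mX: "natD u (mX a b) (bk a @ bk b) (bk b @ bk a)"
proof (induction "a+b" arbitrary: a b rule: less_induct)
  case less
  show ?case
  proof (cases "a = 0 \<or> b = 0")
    case True
    then show ?thesis using natD_Idm[of "bk (a+b)" u] by (auto simp: mX_def idb_def)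
  next
    case False
    then have ab: "a \<ge> 1" "b \<ge> 1" by auto
    define m where "m = min a b"
    define T where "T = (\<lambda>s. Cmp (Cmp (Tns (mM s (b-s)) (mM (a-s) s)) (Tns (Tns (idb s) (mX (a-s) (b-s))) (idb s)))
                       (Tns (mS s (a-s)) (mS (b-s) s)) :: 'a mor)"
    define G where "G = msum [Blk a, Blk b] [Blk b, Blk a] (map T [1..<Suc m])"
    have R2: "R2rhs a b b a = Ad (T 0) G"
      unfolding R2rhs_diag G_def T_def m_def by (simp add: upt_conv_Cons del: upt_Suc)
    have nT: "natD u (T s) [Blk a, Blk b] [Blk b, Blk a]" if s: "s \<in> set [1..<Suc m]" for s
    proof -
      have s1: "1 \<le> s" "s \<le> a" "s \<le> b" using s by (auto simp: m_def)
      have IH: "natD u (mX (a-s) (b-s)) (bk (a-s) @ bk (b-s)) (bk (b-s) @ bk (a-s))"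
        by (rule less) (use s1 in simp)
      have n1: "natD u (Tns (mS s (a-s)) (mS (b-s) s)) (bk (s+(a-s)) @ bk ((b-s)+s)) ((bk s @ bk (a-s)) @ (bk (b-s) @ bk s))"
        by (rule natD_tns[OF natD_mS natD_mS])
      have n2: "natD u (Tns (Tns (idb s) (mX (a-s) (b-s))) (idb s)) ((bk s @ (bk (a-s) @ bk (b-s))) @ bk s) ((bk s @ (bk (b-s) @ bk (a-s))) @ bk s)"
        by (rule natD_tns[OF natD_tns[OF natD_idb IH] natD_idb])
      have n3: "natD u (Tns (mM s (b-s)) (mM (a-s) s)) ((bk s @ bk (b-s)) @ (bk (a-s) @ bk s)) (bk (s+(b-s)) @ bk ((a-s)+s))"
        by (rule natD_tns[OF natD_mM natD_mM])
      have "natD u (T s) (bk (s+(a-s)) @ bk ((b-s)+s)) (bk (s+(b-s)) @ bk ((a-s)+s))"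
        unfolding T_def by (rule natD_cmp'[OF natD_cmp'[OF n3 n2] n1]) simp_all
      then show ?thesis by (rule natD_ty) (use s1 ab in simp_all)
    qed
    have nG: "natD u G [Blk a, Blk b] [Blk b, Blk a]"
      unfolding G_def using ab by (intro natD_msum) (auto intro: nT)
    have T0: "T 0 = Cmp (Cmp (Tns (Idm [Blk b]) (Idm [Blk a])) (Tns (Tns (Idm []) (Cr a b)) (Idm []))) (Tns (Idm [Blk a]) (Idm [Blk b]))"
      unfolding T_def using ab by (simp add: mM_def mS_def mX_def idb_def)
    have tG: "tyof G = Some ([Blk a, Blk b], [Blk b, Blk a])" using nG unfolding natD_def by simp
    have CT: "Cr a b \<simeq> T 0"
    proof -
      have "T 0 \<simeq> Cmp (Cmp (Idm [Blk b, Blk a]) (Tns (Tns (Idm []) (Cr a b)) (Idm []))) (Idm [Blk a, Blk b])"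
        unfolding T0 by (rule E_cmp[OF E_cmpL[OF E_monid'] E_monid']) (use ab in simp_all)
      also have "\<dots> \<simeq> Cmp (Idm [Blk b, Blk a]) (Tns (Tns (Idm []) (Cr a b)) (Idm []))"
        by (rule E_idr) (use ab in simp_all)
      also have "\<dots> \<simeq> Tns (Tns (Idm []) (Cr a b)) (Idm [])"
        by (rule E_idl) (use ab in simp_all)
      also have "\<dots> \<simeq> Tns (Idm []) (Cr a b)"
        by (rule E_unitr) (use ab in simp_all)
      also have "\<dots> \<simeq> Cr a b"
        by (rule E_unitl) (use ab in simp_all)
      finally show ?thesis by (rule EQ_sym)
    qed
    have tT0: "tyof (T 0) = Some ([Blk a, Blk b], [Blk b, Blk a])" unfolding T0 using ab by simp
    note CT
    also have "T 0 \<simeq> Ad (T 0) (Zr [Blk a, Blk b] [Blk b, Blk a])"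
      by (rule EQ_sym[OF E_add_zero[OF tT0]])
    also have "\<dots> \<simeq> Ad (T 0) (Ad G (Sm (-1) G))"
      by (rule E_ad[OF EQ_refl EQ_sym[OF E_add_neg[OF tG]]]) (use tT0 tG ab in simp_all)
    also have "\<dots> \<simeq> Ad (Ad (T 0) G) (Sm (-1) G)"
      by (rule EQ_sym[OF E_add_assoc]) (use tT0 tG in simp_all)
    finally have X: "Cr a b \<simeq> Ad (Ad (T 0) G) (Sm (-1) G)" .
    have hSM: "natD u (Cmp (mS b a) (mM a b)) (bk a @ bk b) (bk b @ bk a)"
      by (rule natD_cmp'[OF natD_mS natD_mM]) (simp add: add.commute)
    have R2e: "Cmp (mS b a) (mM a b) \<simeq> Ad (T 0) G"
    proof -
      have "as_eq (Cmp (mS b a) (mM a b)) (Ad (T 0) G)"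
        using as_eq.R2[OF ab(1,2) ab(2,1) add.commute, where 'k='a] R2 by simp
      then show ?thesis using ab tT0 tG by (intro ax) (simp_all add: mS_def mM_def)
    qed
    have "natD u (Ad (T 0) G) (bk a @ bk b) (bk b @ bk a)" by (rule natD_cong[OF hSM R2e])
    moreover have nG': "natD u G (bk a @ bk b) (bk b @ bk a)" using nG ab by simp
    ultimately have "natD u (Ad (Ad (T 0) G) (Sm (-1) G)) (bk a @ bk b) (bk b @ bk a)"
      by (metis natD_ad natD_sm)
    then have "natD u (Cr a b) (bk a @ bk b) (bk b @ bk a)" by (rule natD_cong[OF _ EQ_sym[OF X]])
    then show ?thesis using ab by (simp add: mX_def)
  qed
qed



fun UA :: "'k \<Rightarrow> 'k ob list \<Rightarrow> 'k mor" where
  "UA u [] = Idm [Red u]"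
| "UA u [Blk a] = Up a u"
| "UA u (Blk a # c # xs) = Cmp (Tns (Up a u) (Idm (c#xs))) (Tns (Idm [Blk a]) (UA u (c#xs)))"
| "UA u (Red v # xs) = Idm []"

lemma tyof_UA[simp]: "blk x \<Longrightarrow> tyof (UA u x) = Some (x @ [Red u], Red u # x)"
  by (induction u x rule: UA.induct) auto

lemma UA_cons: "blk (Blk a # x) \<Longrightarrow> UA u (Blk a # x) \<simeq> Cmp (Tns (Up a u) (Idm x)) (Tns (Idm [Blk a]) (UA u x))"
proof (cases x)
  case Nil
  assume a: "blk (Blk a # x)"
  have "Cmp (Tns (Up a u) (Idm [])) (Tns (Idm [Blk a]) (Idm [Red u])) \<simeq> Cmp (Tns (Up a u) (Idm [])) (Idm [Blk a, Red u])"
    by (rule E_cmpR[OF E_monid']) (use a Nil in simp_all)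
  also have "\<dots> \<simeq> Tns (Up a u) (Idm [])"
    by (rule E_idr) (use a Nil in simp_all)
  also have "\<dots> \<simeq> Up a u"
    by (rule E_unitr) (use a Nil in simp_all)
  finally show ?thesis using Nil by (simp add: EQ_sym)
next
  case (Cons c xs)
  assume a: "blk (Blk a # x)"
  then show ?thesis using Cons by (cases c) (auto intro!: EQ_refl)
qed

lemma UA_app: "blk x \<Longrightarrow> blk x' \<Longrightarrow>
  UA u (x @ x') \<simeq> Cmp (Tns (UA u x) (Idm x')) (Tns (Idm x) (UA u x'))"
proof (induction x)
  case Nil
  have "Cmp (Tns (Idm [Red u]) (Idm x')) (Tns (Idm []) (UA u x')) \<simeq> Cmp (Idm (Red u # x')) (Tns (Idm []) (UA u x'))"
    by (rule E_cmpL[OF E_monid']) (use Nil in simp_all)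
  also have "\<dots> \<simeq> Cmp (Idm (Red u # x')) (UA u x')"
    by (rule E_cmpR[OF E_unitl]) (use Nil in simp_all)
  also have "\<dots> \<simeq> UA u x'"
    by (rule E_idl) (use Nil in simp_all)
  finally show ?case by (simp add: EQ_sym)
next
  case (Cons c x1)
  then obtain a where c: "c = Blk a" and a: "a \<ge> 1" and b1: "blk x1" by (cases c) auto
  note bb = Cons.prems a b1
  have "UA u (c # x1 @ x') \<simeq> Cmp (Tns (Up a u) (Idm (x1@x'))) (Tns (Idm [Blk a]) (UA u (x1@x')))"
    unfolding c by (rule UA_cons) (use bb in simp)
  also have "\<dots> \<simeq> Cmp (Tns (Up a u) (Idm (x1@x'))) (Tns (Idm [Blk a]) (Cmp (Tns (UA u x1) (Idm x')) (Tns (Idm x1) (UA u x'))))"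
    by (rule E_cmpR[OF E_tnsR[OF Cons.IH]]) (use bb in simp_all)
  also have "\<dots> \<simeq> Cmp (Tns (Up a u) (Idm (x1@x'))) (Cmp (Tns (Idm [Blk a]) (Tns (UA u x1) (Idm x'))) (Tns (Idm [Blk a]) (Tns (Idm x1) (UA u x'))))"
    by (rule E_cmpR[OF E_tns_cmp_id_l]) (use bb in simp_all)
  also have "\<dots> \<simeq> Cmp (Cmp (Tns (Up a u) (Idm (x1@x'))) (Tns (Idm [Blk a]) (Tns (UA u x1) (Idm x')))) (Tns (Idm [Blk a]) (Tns (Idm x1) (UA u x')))"
    by (rule EQ_sym[OF E_assoc]) (use bb in simp_all)
  finally have L: "UA u (c # x1 @ x') \<simeq> \<dots>" .
  have "Cmp (Tns (UA u (c#x1)) (Idm x')) (Tns (Idm (c#x1)) (UA u x')) \<simeq>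
        Cmp (Tns (Cmp (Tns (Up a u) (Idm x1)) (Tns (Idm [Blk a]) (UA u x1))) (Idm x')) (Tns (Idm (c#x1)) (UA u x'))"
    unfolding c by (rule E_cmpL[OF E_tnsL[OF UA_cons]]) (use bb in simp_all)
  also have "\<dots> \<simeq> Cmp (Cmp (Tns (Tns (Up a u) (Idm x1)) (Idm x')) (Tns (Tns (Idm [Blk a]) (UA u x1)) (Idm x'))) (Tns (Idm (c#x1)) (UA u x'))"
    by (rule E_cmpL[OF E_tns_cmp_id_r]) (use bb c in simp_all)
  also have "\<dots> \<simeq> Cmp (Cmp (Tns (Up a u) (Idm (x1@x'))) (Tns (Idm [Blk a]) (Tns (UA u x1) (Idm x')))) (Tns (Idm [Blk a]) (Tns (Idm x1) (UA u x')))"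
  proof (rule E_cmp[OF E_cmp])
    have "Tns (Idm (c#x1)) (UA u x') \<simeq> Tns (Tns (Idm [Blk a]) (Idm x1)) (UA u x')"
      by (rule E_tnsL[OF EQ_sym[OF E_monid']]) (use bb c in simp_all)
    also have "\<dots> \<simeq> Tns (Idm [Blk a]) (Tns (Idm x1) (UA u x'))"
      by (rule E_tassoc) (use bb in simp_all)
    finally show "Tns (Idm (c#x1)) (UA u x') \<simeq> \<dots>" .
    show "Tns (Tns (Idm [Blk a]) (UA u x1)) (Idm x') \<simeq> Tns (Idm [Blk a]) (Tns (UA u x1) (Idm x'))"
      by (rule E_tassoc) (use bb in simp_all)
    have "Tns (Tns (Up a u) (Idm x1)) (Idm x') \<simeq> Tns (Up a u) (Tns (Idm x1) (Idm x'))"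
      by (rule E_tassoc) (use bb in simp_all)
    also have "\<dots> \<simeq> Tns (Up a u) (Idm (x1@x'))"
      by (rule E_tnsR[OF E_monid']) (use bb in simp_all)
    finally show "Tns (Tns (Up a u) (Idm x1)) (Idm x') \<simeq> \<dots>" .
  qed (use bb c in simp_all)
  finally have R: "Cmp (Tns (UA u (c#x1)) (Idm x')) (Tns (Idm (c#x1)) (UA u x')) \<simeq> \<dots>" .
  show ?case using L EQ_sym[OF R] by (simp add: EQ_trans)
qed

definition natU :: "'k::comm_ring_1 \<Rightarrow> 'k mor \<Rightarrow> 'k ob list \<Rightarrow> 'k ob list \<Rightarrow> bool" where
  "natU u f x y \<longleftrightarrow> blk x \<and> blk y \<and> tyof f = Some (x,y) \<and>
     Cmp (Tns (Idm [Red u]) f) (UA u x) \<simeq> Cmp (UA u y) (Tns f (Idm [Red u]))"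

lemma natU_ty: "natU u f x y \<Longrightarrow> x = x' \<Longrightarrow> y = y' \<Longrightarrow> natU u f x' y'" by simp

lemma natU_cong: assumes "natU u f x y" "f \<simeq> g" shows "natU u g x y"
proof -
  have t: "tyof f = Some (x,y)" "blk x" "blk y" and n: "Cmp (Tns (Idm [Red u]) f) (UA u x) \<simeq> Cmp (UA u y) (Tns f (Idm [Red u]))"
    using assms(1) unfolding natU_def by auto
  have tg: "tyof g = Some (x,y)" using EQ_ty[OF assms(2)] t by simp
  have "Cmp (Tns (Idm [Red u]) g) (UA u x) \<simeq> Cmp (Tns (Idm [Red u]) f) (UA u x)"
    by (rule E_cmpL[OF E_tnsR[OF EQ_sym[OF assms(2)]]]) (use t tg in simp_all)
  also note n
  also have "Cmp (UA u y) (Tns f (Idm [Red u])) \<simeq> Cmp (UA u y) (Tns g (Idm [Red u]))"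
    by (rule E_cmpR[OF E_tnsL[OF assms(2)]]) (use t tg in simp_all)
  finally show ?thesis using t tg unfolding natU_def by simp
qed

lemma natU_Idm: assumes "blk x" shows "natU u (Idm x) x x"
proof -
  have "Cmp (Tns (Idm [Red u]) (Idm x)) (UA u x) \<simeq> Cmp (Idm (Red u # x)) (UA u x)"
    by (rule E_cmpL[OF E_monid']) (use assms in simp_all)
  also have "\<dots> \<simeq> UA u x" by (rule E_idl) (use assms in simp_all)
  also have "\<dots> \<simeq> Cmp (UA u x) (Idm (x @ [Red u]))" by (rule EQ_sym[OF E_idr]) (use assms in simp_all)
  also have "\<dots> \<simeq> Cmp (UA u x) (Tns (Idm x) (Idm [Red u]))"
    by (rule E_cmpR[OF EQ_sym[OF E_monid']]) (use assms in simp_all)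
  finally show ?thesis using assms unfolding natU_def by simp
qed

lemma natU_cmp: assumes f: "natU u f y z" and g: "natU u g x y" shows "natU u (Cmp f g) x z"
proof -
  have tf: "tyof f = Some (y,z)" "blk y" "blk z" and nf: "Cmp (Tns (Idm [Red u]) f) (UA u y) \<simeq> Cmp (UA u z) (Tns f (Idm [Red u]))"
    using f unfolding natU_def by auto
  have tg: "tyof g = Some (x,y)" "blk x" and ng: "Cmp (Tns (Idm [Red u]) g) (UA u x) \<simeq> Cmp (UA u y) (Tns g (Idm [Red u]))"
    using g unfolding natU_def by auto
  note t = tf tg
  have "Cmp (Tns (Idm [Red u]) (Cmp f g)) (UA u x) \<simeq> Cmp (Cmp (Tns (Idm [Red u]) f) (Tns (Idm [Red u]) g)) (UA u x)"
    by (rule E_cmpL[OF E_tns_cmp_id_l]) (use t in simp_all)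
  also have "\<dots> \<simeq> Cmp (Tns (Idm [Red u]) f) (Cmp (Tns (Idm [Red u]) g) (UA u x))"
    by (rule E_assoc) (use t in simp_all)
  also have "\<dots> \<simeq> Cmp (Tns (Idm [Red u]) f) (Cmp (UA u y) (Tns g (Idm [Red u])))"
    by (rule E_cmpR[OF ng]) (use t in simp_all)
  also have "\<dots> \<simeq> Cmp (Cmp (Tns (Idm [Red u]) f) (UA u y)) (Tns g (Idm [Red u]))"
    by (rule EQ_sym[OF E_assoc]) (use t in simp_all)
  also have "\<dots> \<simeq> Cmp (Cmp (UA u z) (Tns f (Idm [Red u]))) (Tns g (Idm [Red u]))"
    by (rule E_cmpL[OF nf]) (use t in simp_all)
  also have "\<dots> \<simeq> Cmp (UA u z) (Cmp (Tns f (Idm [Red u])) (Tns g (Idm [Red u])))"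
    by (rule E_assoc) (use t in simp_all)
  also have "\<dots> \<simeq> Cmp (UA u z) (Tns (Cmp f g) (Idm [Red u]))"
    by (rule E_cmpR[OF EQ_sym[OF E_tns_cmp_id_r]]) (use t in simp_all)
  finally show ?thesis using t unfolding natU_def by simp
qed

lemma natU_cmp': "natU u f y z \<Longrightarrow> natU u g x y' \<Longrightarrow> y = y' \<Longrightarrow> natU u (Cmp f g) x z"
  using natU_cmp by blast

lemma natU_tns: assumes f: "natU u f x y" and g: "natU u g x' y'" shows "natU u (Tns f g) (x@x') (y@y')"
proof -
  have tf: "tyof f = Some (x,y)" "blk x" "blk y" and nf: "Cmp (Tns (Idm [Red u]) f) (UA u x) \<simeq> Cmp (UA u y) (Tns f (Idm [Red u]))"
    using f unfolding natU_def by auto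
  have tg: "tyof g = Some (x',y')" "blk x'" "blk y'" and ng: "Cmp (Tns (Idm [Red u]) g) (UA u x') \<simeq> Cmp (UA u y') (Tns g (Idm [Red u]))"
    using g unfolding natU_def by auto
  note t = tf tg
  have s4: "Cmp (Tns (Tns (Idm [Red u]) f) g) (Tns (UA u x) (Idm x')) \<simeq> Cmp (Tns (UA u y) (Idm y')) (Tns (Tns f (Idm [Red u])) g)"
  proof -
    have "Cmp (Tns (Tns (Idm [Red u]) f) g) (Tns (UA u x) (Idm x')) \<simeq> Tns (Cmp (Tns (Idm [Red u]) f) (UA u x)) (Cmp g (Idm x'))"
      by (rule EQ_sym[OF E_inter]) (use t in simp_all)
    also have "\<dots> \<simeq> Tns (Cmp (UA u y) (Tns f (Idm [Red u]))) (Cmp g (Idm x'))"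
      by (rule E_tnsL[OF nf]) (use t in simp_all)
    also have "\<dots> \<simeq> Tns (Cmp (UA u y) (Tns f (Idm [Red u]))) g"
      by (rule E_tnsR[OF E_idr]) (use t in simp_all)
    also have "\<dots> \<simeq> Tns (Cmp (UA u y) (Tns f (Idm [Red u]))) (Cmp (Idm y') g)"
      by (rule E_tnsR[OF EQ_sym[OF E_idl]]) (use t in simp_all)
    also have "\<dots> \<simeq> Cmp (Tns (UA u y) (Idm y')) (Tns (Tns f (Idm [Red u])) g)"
      by (rule E_inter) (use t in simp_all)
    finally show ?thesis .
  qed
  have s6: "Cmp (Tns (Tns f (Idm [Red u])) g) (Tns (Idm x) (UA u x')) \<simeq> Cmp (Tns (Idm y) (UA u y')) (Tns f (Tns g (Idm [Red u])))"
  proof -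
    have "Cmp (Tns (Tns f (Idm [Red u])) g) (Tns (Idm x) (UA u x')) \<simeq> Cmp (Tns f (Tns (Idm [Red u]) g)) (Tns (Idm x) (UA u x'))"
      by (rule E_cmpL[OF E_tassoc]) (use t in simp_all)
    also have "\<dots> \<simeq> Tns (Cmp f (Idm x)) (Cmp (Tns (Idm [Red u]) g) (UA u x'))"
      by (rule EQ_sym[OF E_inter]) (use t in simp_all)
    also have "\<dots> \<simeq> Tns f (Cmp (Tns (Idm [Red u]) g) (UA u x'))"
      by (rule E_tnsL[OF E_idr]) (use t in simp_all)
    also have "\<dots> \<simeq> Tns f (Cmp (UA u y') (Tns g (Idm [Red u])))"
      by (rule E_tnsR[OF ng]) (use t in simp_all)
    also have "\<dots> \<simeq> Tns (Cmp (Idm y) f) (Cmp (UA u y') (Tns g (Idm [Red u])))"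
      by (rule E_tnsL[OF EQ_sym[OF E_idl]]) (use t in simp_all)
    also have "\<dots> \<simeq> Cmp (Tns (Idm y) (UA u y')) (Tns f (Tns g (Idm [Red u])))"
      by (rule E_inter) (use t in simp_all)
    finally show ?thesis .
  qed
  have "Cmp (Tns (Idm [Red u]) (Tns f g)) (UA u (x@x')) \<simeq> Cmp (Tns (Idm [Red u]) (Tns f g)) (Cmp (Tns (UA u x) (Idm x')) (Tns (Idm x) (UA u x')))"
    by (rule E_cmpR[OF UA_app]) (use t in simp_all)
  also have "\<dots> \<simeq> Cmp (Tns (Tns (Idm [Red u]) f) g) (Cmp (Tns (UA u x) (Idm x')) (Tns (Idm x) (UA u x')))"
    by (rule E_cmpL[OF EQ_sym[OF E_tassoc]]) (use t in simp_all)
  also have "\<dots> \<simeq> Cmp (Cmp (Tns (Tns (Idm [Red u]) f) g) (Tns (UA u x) (Idm x'))) (Tns (Idm x) (UA u x'))"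
    by (rule EQ_sym[OF E_assoc]) (use t in simp_all)
  also have "\<dots> \<simeq> Cmp (Cmp (Tns (UA u y) (Idm y')) (Tns (Tns f (Idm [Red u])) g)) (Tns (Idm x) (UA u x'))"
    by (rule E_cmpL[OF s4]) (use t in simp_all)
  also have "\<dots> \<simeq> Cmp (Tns (UA u y) (Idm y')) (Cmp (Tns (Tns f (Idm [Red u])) g) (Tns (Idm x) (UA u x')))"
    by (rule E_assoc) (use t in simp_all)
  also have "\<dots> \<simeq> Cmp (Tns (UA u y) (Idm y')) (Cmp (Tns (Idm y) (UA u y')) (Tns f (Tns g (Idm [Red u]))))"
    by (rule E_cmpR[OF s6]) (use t in simp_all)
  also have "\<dots> \<simeq> Cmp (Cmp (Tns (UA u y) (Idm y')) (Tns (Idm y) (UA u y'))) (Tns f (Tns g (Idm [Red u])))"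
    by (rule EQ_sym[OF E_assoc]) (use t in simp_all)
  also have "\<dots> \<simeq> Cmp (UA u (y@y')) (Tns f (Tns g (Idm [Red u])))"
    by (rule E_cmpL[OF EQ_sym[OF UA_app]]) (use t in simp_all)
  also have "\<dots> \<simeq> Cmp (UA u (y@y')) (Tns (Tns f g) (Idm [Red u]))"
    by (rule E_cmpR[OF EQ_sym[OF E_tassoc]]) (use t in simp_all)
  finally show ?thesis using t unfolding natU_def by simp
qed

lemma natU_ad: assumes f: "natU u f x y" and g: "natU u g x y" shows "natU u (Ad f g) x y"
proof -
  have tf: "tyof f = Some (x,y)" "blk x" "blk y" and nf: "Cmp (Tns (Idm [Red u]) f) (UA u x) \<simeq> Cmp (UA u y) (Tns f (Idm [Red u]))"
    using f unfolding natU_def by auto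
  have tg: "tyof g = Some (x,y)" and ng: "Cmp (Tns (Idm [Red u]) g) (UA u x) \<simeq> Cmp (UA u y) (Tns g (Idm [Red u]))"
    using g unfolding natU_def by auto
  note t = tf tg
  have "Cmp (Tns (Idm [Red u]) (Ad f g)) (UA u x) \<simeq> Cmp (Ad (Tns (Idm [Red u]) f) (Tns (Idm [Red u]) g)) (UA u x)"
    by (rule E_cmpL[OF E_tns_addr]) (use t in simp_all)
  also have "\<dots> \<simeq> Ad (Cmp (Tns (Idm [Red u]) f) (UA u x)) (Cmp (Tns (Idm [Red u]) g) (UA u x))"
    by (rule E_cmp_addl) (use t in simp_all)
  also have "\<dots> \<simeq> Ad (Cmp (UA u y) (Tns f (Idm [Red u]))) (Cmp (UA u y) (Tns g (Idm [Red u])))"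
    by (rule E_ad[OF nf ng]) (use t in simp_all)
  also have "\<dots> \<simeq> Cmp (UA u y) (Ad (Tns f (Idm [Red u])) (Tns g (Idm [Red u])))"
    by (rule EQ_sym[OF E_cmp_addr]) (use t in simp_all)
  also have "\<dots> \<simeq> Cmp (UA u y) (Tns (Ad f g) (Idm [Red u]))"
    by (rule E_cmpR[OF EQ_sym[OF E_tns_addl]]) (use t in simp_all)
  finally show ?thesis using t unfolding natU_def by simp
qed

lemma natU_sm: assumes f: "natU u f x y" shows "natU u (Sm c f) x y"
proof -
  have t: "tyof f = Some (x,y)" "blk x" "blk y" and nf: "Cmp (Tns (Idm [Red u]) f) (UA u x) \<simeq> Cmp (UA u y) (Tns f (Idm [Red u]))"
    using f unfolding natU_def by auto
  have "Cmp (Tns (Idm [Red u]) (Sm c f)) (UA u x) \<simeq> Cmp (Sm c (Tns (Idm [Red u]) f)) (UA u x)"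
    by (rule E_cmpL[OF E_tns_smr]) (use t in simp_all)
  also have "\<dots> \<simeq> Sm c (Cmp (Tns (Idm [Red u]) f) (UA u x))"
    by (rule E_cmp_sml) (use t in simp_all)
  also have "\<dots> \<simeq> Sm c (Cmp (UA u y) (Tns f (Idm [Red u])))"
    by (rule E_sm[OF nf])
  also have "\<dots> \<simeq> Cmp (UA u y) (Sm c (Tns f (Idm [Red u])))"
    by (rule EQ_sym[OF E_cmp_smr]) (use t in simp_all)
  also have "\<dots> \<simeq> Cmp (UA u y) (Tns (Sm c f) (Idm [Red u]))"
    by (rule E_cmpR[OF EQ_sym[OF E_tns_sml]]) (use t in simp_all)
  finally show ?thesis using t unfolding natU_def by simp
qed

lemma natU_zr: assumes t: "blk x" "blk y" shows "natU u (Zr x y) x y"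
proof -
  have "Cmp (Tns (Idm [Red u]) (Zr x y)) (UA u x) \<simeq> Cmp (Zr ([Red u] @ x) ([Red u] @ y)) (UA u x)"
    by (rule E_cmpL[OF E_tns_zrr]) (use t in simp_all)
  also have "\<dots> \<simeq> Zr (x @ [Red u]) ([Red u] @ y)"
    by (rule E_cmp_zrl) (use t in simp_all)
  also have "\<dots> \<simeq> Cmp (UA u y) (Zr (x @ [Red u]) (y @ [Red u]))"
    by (rule EQ_sym[OF E_cmp_zrr]) (use t in simp_all)
  also have "\<dots> \<simeq> Cmp (UA u y) (Tns (Zr x y) (Idm [Red u]))"
    by (rule E_cmpR[OF EQ_sym[OF E_tns_zrl]]) (use t in simp_all)
  finally show ?thesis using t unfolding natU_def by simp
qed

lemma natU_msum: "blk x \<Longrightarrow> blk y \<Longrightarrow> (\<And>t. t \<in> set ts \<Longrightarrow> natU u t x y) \<Longrightarrow> natU u (msum x y ts) x y"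
  by (induction ts) (auto intro: natU_zr natU_ad)



lemma natU_Mg: assumes ab: "a \<ge> 1" "b \<ge> 1" shows "natU u (Mg a b) [Blk a, Blk b] [Blk (a+b)]"
proof -
  have r: "Cmp (Up (a+b) u) (Tns (Mg a b) (Idm [Red u])) \<simeq>
     Cmp (Cmp (Tns (Idm [Red u]) (Mg a b)) (Tns (Up a u) (Idm [Blk b]))) (Tns (Idm [Blk a]) (Up b u))"
    using as_eq.R9d[OF ab, of u] ab by (intro ax) (simp_all add: mU_def mM_def idb_def)
  have "Cmp (Tns (Idm [Red u]) (Mg a b)) (UA u [Blk a, Blk b]) \<simeq>
     Cmp (Cmp (Tns (Idm [Red u]) (Mg a b)) (Tns (Up a u) (Idm [Blk b]))) (Tns (Idm [Blk a]) (Up b u))"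
    by (simp, rule EQ_sym[OF E_assoc]) (use ab in simp_all)
  also note EQ_sym[OF r]
  finally show ?thesis using ab unfolding natU_def by simp
qed

lemma natU_Sp: assumes ab: "a \<ge> 1" "b \<ge> 1" shows "natU u (Sp a b) [Blk (a+b)] [Blk a, Blk b]"
proof -
  have r: "Cmp (Tns (Idm [Red u]) (Sp a b)) (Up (a+b) u) \<simeq>
     Cmp (Cmp (Tns (Up a u) (Idm [Blk b])) (Tns (Idm [Blk a]) (Up b u))) (Tns (Sp a b) (Idm [Red u]))"
    using as_eq.R9a[OF ab, of u] ab by (intro ax) (simp_all add: mU_def mS_def idb_def)
  then show ?thesis using ab unfolding natU_def by simp
qed

lemma natU_mM: "natU u (mM s t) (bk s @ bk t) (bk (s+t))"
proof (cases "s = 0 \<or> t = 0")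
  case True
  then show ?thesis using natU_Idm[of "bk (s+t)" u] by (auto simp: mM_def idb_def)
next
  case False
  then show ?thesis using natU_Mg[of s t u] by (simp add: mM_def)
qed

lemma natU_mS: "natU u (mS s t) (bk (s+t)) (bk s @ bk t)"
proof (cases "s = 0 \<or> t = 0")
  case True
  then show ?thesis using natU_Idm[of "bk (s+t)" u] by (auto simp: mS_def idb_def)
next
  case False
  then show ?thesis using natU_Sp[of s t u] by (simp add: mS_def)
qed

lemma natU_idb: "natU u (idb s) (bk s) (bk s)"
  using natU_Idm[of "bk s" u] by (simp add: idb_def)

lemma natU_mX: "natU u (mX a b) (bk a @ bk b) (bk b @ bk a)"
proof (induction "a+b" arbitrary: a b rule: less_induct)
  case less
  show ?case
  proof (cases "a = 0 \<or> b = 0")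
    case True
    then show ?thesis using natU_Idm[of "bk (a+b)" u] by (auto simp: mX_def idb_def)
  next
    case False
    then have ab: "a \<ge> 1" "b \<ge> 1" by auto
    define m where "m = min a b"
    define T where "T = (\<lambda>s. Cmp (Cmp (Tns (mM s (b-s)) (mM (a-s) s)) (Tns (Tns (idb s) (mX (a-s) (b-s))) (idb s)))
                       (Tns (mS s (a-s)) (mS (b-s) s)) :: 'a mor)"
    define G where "G = msum [Blk a, Blk b] [Blk b, Blk a] (map T [1..<Suc m])"
    have R2: "R2rhs a b b a = Ad (T 0) G"
      unfolding R2rhs_diag G_def T_def m_def by (simp add: upt_conv_Cons del: upt_Suc)
    have nT: "natU u (T s) [Blk a, Blk b] [Blk b, Blk a]" if s: "s \<in> set [1..<Suc m]" for s
    proof -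
      have s1: "1 \<le> s" "s \<le> a" "s \<le> b" using s by (auto simp: m_def)
      have IH: "natU u (mX (a-s) (b-s)) (bk (a-s) @ bk (b-s)) (bk (b-s) @ bk (a-s))"
        by (rule less) (use s1 in simp)
      have n1: "natU u (Tns (mS s (a-s)) (mS (b-s) s)) (bk (s+(a-s)) @ bk ((b-s)+s)) ((bk s @ bk (a-s)) @ (bk (b-s) @ bk s))"
        by (rule natU_tns[OF natU_mS natU_mS])
      have n2: "natU u (Tns (Tns (idb s) (mX (a-s) (b-s))) (idb s)) ((bk s @ (bk (a-s) @ bk (b-s))) @ bk s) ((bk s @ (bk (b-s) @ bk (a-s))) @ bk s)"
        by (rule natU_tns[OF natU_tns[OF natU_idb IH] natU_idb])
      have n3: "natU u (Tns (mM s (b-s)) (mM (a-s) s)) ((bk s @ bk (b-s)) @ (bk (a-s) @ bk s)) (bk (s+(b-s)) @ bk ((a-s)+s))"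
        by (rule natU_tns[OF natU_mM natU_mM])
      have "natU u (T s) (bk (s+(a-s)) @ bk ((b-s)+s)) (bk (s+(b-s)) @ bk ((a-s)+s))"
        unfolding T_def by (rule natU_cmp'[OF natU_cmp'[OF n3 n2] n1]) simp_all
      then show ?thesis by (rule natU_ty) (use s1 ab in simp_all)
    qed
    have nG: "natU u G [Blk a, Blk b] [Blk b, Blk a]"
      unfolding G_def using ab by (intro natU_msum) (auto intro: nT)
    have T0: "T 0 = Cmp (Cmp (Tns (Idm [Blk b]) (Idm [Blk a])) (Tns (Tns (Idm []) (Cr a b)) (Idm []))) (Tns (Idm [Blk a]) (Idm [Blk b]))"
      unfolding T_def using ab by (simp add: mM_def mS_def mX_def idb_def)
    have tG: "tyof G = Some ([Blk a, Blk b], [Blk b, Blk a])" using nG unfolding natU_def by simp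
    have CT: "Cr a b \<simeq> T 0"
    proof -
      have "T 0 \<simeq> Cmp (Cmp (Idm [Blk b, Blk a]) (Tns (Tns (Idm []) (Cr a b)) (Idm []))) (Idm [Blk a, Blk b])"
        unfolding T0 by (rule E_cmp[OF E_cmpL[OF E_monid'] E_monid']) (use ab in simp_all)
      also have "\<dots> \<simeq> Cmp (Idm [Blk b, Blk a]) (Tns (Tns (Idm []) (Cr a b)) (Idm []))"
        by (rule E_idr) (use ab in simp_all)
      also have "\<dots> \<simeq> Tns (Tns (Idm []) (Cr a b)) (Idm [])"
        by (rule E_idl) (use ab in simp_all)
      also have "\<dots> \<simeq> Tns (Idm []) (Cr a b)"
        by (rule E_unitr) (use ab in simp_all)
      also have "\<dots> \<simeq> Cr a b"
        by (rule E_unitl) (use ab in simp_all)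
      finally show ?thesis by (rule EQ_sym)
    qed
    have tT0: "tyof (T 0) = Some ([Blk a, Blk b], [Blk b, Blk a])" unfolding T0 using ab by simp
    note CT
    also have "T 0 \<simeq> Ad (T 0) (Zr [Blk a, Blk b] [Blk b, Blk a])"
      by (rule EQ_sym[OF E_add_zero[OF tT0]])
    also have "\<dots> \<simeq> Ad (T 0) (Ad G (Sm (-1) G))"
      by (rule E_ad[OF EQ_refl EQ_sym[OF E_add_neg[OF tG]]]) (use tT0 tG ab in simp_all)
    also have "\<dots> \<simeq> Ad (Ad (T 0) G) (Sm (-1) G)"
      by (rule EQ_sym[OF E_add_assoc]) (use tT0 tG in simp_all)
    finally have X: "Cr a b \<simeq> Ad (Ad (T 0) G) (Sm (-1) G)" .
    have hSM: "natU u (Cmp (mS b a) (mM a b)) (bk a @ bk b) (bk b @ bk a)"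
      by (rule natU_cmp'[OF natU_mS natU_mM]) (simp add: add.commute)
    have R2e: "Cmp (mS b a) (mM a b) \<simeq> Ad (T 0) G"
    proof -
      have "as_eq (Cmp (mS b a) (mM a b)) (Ad (T 0) G)"
        using as_eq.R2[OF ab(1,2) ab(2,1) add.commute, where 'k='a] R2 by simp
      then show ?thesis using ab tT0 tG by (intro ax) (simp_all add: mS_def mM_def)
    qed
    have "natU u (Ad (T 0) G) (bk a @ bk b) (bk b @ bk a)" by (rule natU_cong[OF hSM R2e])
    moreover have nG': "natU u G (bk a @ bk b) (bk b @ bk a)" using nG ab by simp
    ultimately have "natU u (Ad (Ad (T 0) G) (Sm (-1) G)) (bk a @ bk b) (bk b @ bk a)"
      by (metis natU_ad natU_sm)
    then have "natU u (Cr a b) (bk a @ bk b) (bk b @ bk a)" by (rule natU_cong[OF _ EQ_sym[OF X]])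
    then show ?thesis using ab by (simp add: mX_def)
  qed
qed

theorem lemma3p4:
  fixes a b :: nat and u :: "'k::comm_ring_1"
  assumes "a \<ge> 1" and "b \<ge> 1"
  shows "hty (Cmp (Cmp (Tns (Cr a b) (Idm [Red u])) (Tns (Idm [Blk a]) (Dn u b))) (Tns (Dn u a) (Idm [Blk b])))
             [Red u, Blk a, Blk b] [Blk b, Blk a, Red u]
       \<and> as_eq (Cmp (Cmp (Tns (Cr a b) (Idm [Red u])) (Tns (Idm [Blk a]) (Dn u b))) (Tns (Dn u a) (Idm [Blk b])))
               (Cmp (Cmp (Tns (Idm [Blk b]) (Dn u a)) (Tns (Dn u b) (Idm [Blk a]))) (Tns (Idm [Red u]) (Cr a b)))
       \<and> hty (Cmp (Cmp (Tns (Idm [Red u]) (Cr a b)) (Tns (Up a u) (Idm [Blk b]))) (Tns (Idm [Blk a]) (Up b u)))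
             [Blk a, Blk b, Red u] [Red u, Blk b, Blk a]
       \<and> as_eq (Cmp (Cmp (Tns (Idm [Red u]) (Cr a b)) (Tns (Up a u) (Idm [Blk b]))) (Tns (Idm [Blk a]) (Up b u)))
               (Cmp (Cmp (Tns (Up b u) (Idm [Blk a])) (Tns (Idm [Blk b]) (Up a u))) (Tns (Cr a b) (Idm [Red u])))"
proof -
  note ab = assms
  have nD: "natD u (Cr a b) [Blk a, Blk b] [Blk b, Blk a]"
    using natD_mX[of u a b] ab by (simp add: mX_def)
  have nU: "natU u (Cr a b) [Blk a, Blk b] [Blk b, Blk a]"
    using natU_mX[of u a b] ab by (simp add: mX_def)
  have D1: "Cmp (Tns (Cr a b) (Idm [Red u])) (Cmp (Tns (Idm [Blk a]) (Dn u b)) (Tns (Dn u a) (Idm [Blk b]))) \<simeq>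
      Cmp (Cmp (Tns (Idm [Blk b]) (Dn u a)) (Tns (Dn u b) (Idm [Blk a]))) (Tns (Idm [Red u]) (Cr a b))"
    using nD unfolding natD_def by simp
  have eD: "Cmp (Cmp (Tns (Cr a b) (Idm [Red u])) (Tns (Idm [Blk a]) (Dn u b))) (Tns (Dn u a) (Idm [Blk b])) \<simeq>
      Cmp (Cmp (Tns (Idm [Blk b]) (Dn u a)) (Tns (Dn u b) (Idm [Blk a]))) (Tns (Idm [Red u]) (Cr a b))"
    by (rule EQ_trans[OF E_assoc D1]) (use ab in simp)
  have U1: "Cmp (Tns (Idm [Red u]) (Cr a b)) (Cmp (Tns (Up a u) (Idm [Blk b])) (Tns (Idm [Blk a]) (Up b u))) \<simeq>
      Cmp (Cmp (Tns (Up b u) (Idm [Blk a])) (Tns (Idm [Blk b]) (Up a u))) (Tns (Cr a b) (Idm [Red u]))"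
    using nU unfolding natU_def by simp
  have eU: "Cmp (Cmp (Tns (Idm [Red u]) (Cr a b)) (Tns (Up a u) (Idm [Blk b]))) (Tns (Idm [Blk a]) (Up b u)) \<simeq>
      Cmp (Cmp (Tns (Up b u) (Idm [Blk a])) (Tns (Idm [Blk b]) (Up a u))) (Tns (Cr a b) (Idm [Red u]))"
    by (rule EQ_trans[OF E_assoc U1]) (use ab in simp)
  have t1: "tyof (Cmp (Cmp (Tns (Cr a b) (Idm [Red u])) (Tns (Idm [Blk a]) (Dn u b))) (Tns (Dn u a) (Idm [Blk b])))
     = Some ([Red u, Blk a, Blk b], [Blk b, Blk a, Red u])" using ab by simp
  have t2: "tyof (Cmp (Cmp (Tns (Idm [Red u]) (Cr a b)) (Tns (Up a u) (Idm [Blk b]))) (Tns (Idm [Blk a]) (Up b u)))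
     = Some ([Blk a, Blk b, Red u], [Red u, Blk b, Blk a])" using ab by simp
  show ?thesis using tyof_sound[OF t1] tyof_sound[OF t2] eD eU unfolding EQ_def by blast
qed


end
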